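(* Let $H=\bigcup_{j=1}^n(c_j,d_j)\subset\mathbb R$ with pairwise disjoint closed intervals $[c_j,d_j]$, let $\mathcal B$ be finite and $m\ge2$. Assume for each $\beta\in\mathcal B$: $b_\beta,\theta_\beta\in C^m(\bar H)$, $b_\beta>0$ on $\bar H$, $\theta_\beta(H)\subset H$; and there exist $\mu\ge1$ and $\kappa<1$ with $|\theta_\omega(x)-\theta_\omega(y)|\le\kappa|x-y|$ for all $\omega\in\mathcal B_\mu$, $x,y\in\bar H$. For $s>0$ let $v_s$ be the strictly positive, normalized $C^m$ eigenvector of $(L_sf)(x)=\sum_{\beta\in\mathcal B}[b_\beta(x)]^sf(\theta_\beta(x))$ (with eigenvalue $r(L_s)$). Let $\epsilon_0=1$ and $\epsilon_\nu=\sup\{|\theta_\omega(x)-\theta_\omega(y)|/|x-y|:\omega\in\mathcal B_\nu,x,y\in H,x\ne y\}$ for $\nu\ge1$, and let $C_1=\sup\{|Db_\beta(x)|/b_\beta(x):\beta\in\mathcal B,x\in H\}$, $C_2=\sup\{|D^2b_\beta(x)|/b_\beta(x):\beta\in\mathcal B,x\in H\}$, $M_0=\sup\{|D^2\theta_\beta(x)|:\beta\in\mathcal B,x\in\bar H\}$. Then for all $x\in\bar H$, $$\frac{D^2v_s(x)}{v_s(x)}\le s^2C_1^2\Big(\sum_{k=0}^\infty\epsilon_k\Big)^2+s\Big(\sum_{k=0}^\infty\epsilon_k^2\Big)\Big[C_2+C_1M_0\sum_{k=0}^\infty\epsilon_k\Big]$$ and $$\frac{D^2v_s(x)}{v_s(x)}\ge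 -s\Big(\sum_{k=0}^\infty\epsilon_k^2\Big)\Big[(C_2+C_1^2)+C_1M_0\sum_{k=0}^\infty\epsilon_k\Big].$$
   Context: $D=d/dx$. $\mathcal B_\nu=\{(j_1,\ldots,j_\nu):j_k\in\mathcal B\}$ and $\theta_{(j_1,\ldots,j_\nu)}=\theta_{j_\nu}\circ\cdots\circ\theta_{j_1}$. $C^m(\bar H)$ denotes real $C^m$ functions on $H$ whose derivatives of order $\le m$ extend continuously to $\bar H$. Under these hypotheses $L_s$ acting on $C^m(\bar H)$ has a strictly positive $C^m$ eigenvector, unique up to positive multiples, with eigenvalue $r(L_s)>0$. *)

theory Defs
  imports "HOL-Analysis.Analysis"
begin

text \<open>C^m(closure H): f is C^m on the open set H and its derivatives of order \<le> m
  extend continuously to closure H.\<close>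
definition Cm_closure :: "nat \<Rightarrow> real set \<Rightarrow> (real \<Rightarrow> real) \<Rightarrow> (nat \<Rightarrow> real \<Rightarrow> real) \<Rightarrow> bool" where
  "Cm_closure m H f Df \<longleftrightarrow>
     (\<forall>x\<in>closure H. Df 0 x = f x) \<and>
     (\<forall>k\<le>m. continuous_on (closure H) (Df k)) \<and>
     (\<forall>k<m. \<forall>x\<in>H. (Df k has_real_derivative Df (Suc k) x) (at x))"

text \<open>theta_word theta [j1,...,jnu] = theta jnu o ... o theta j1.\<close>
fun theta_word :: "('b \<Rightarrow> real \<Rightarrow> real) \<Rightarrow> 'b list \<Rightarrow> real \<Rightarrow> real" where
  "theta_word \<theta> [] = id"
| "theta_word \<theta> (j # \<omega>) = theta_word \<theta> \<omega> \<circ> \<theta> j"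

definition words :: "'b set \<Rightarrow> nat \<Rightarrow> 'b list set" where
  "words B \<nu> = {\<omega>. length \<omega> = \<nu> \<and> set \<omega> \<subseteq> B}"

definition eps_seq :: "'b set \<Rightarrow> ('b \<Rightarrow> real \<Rightarrow> real) \<Rightarrow> real set \<Rightarrow> nat \<Rightarrow> real" where
  "eps_seq B \<theta> H \<nu> = (if \<nu> = 0 then 1 else
     Sup {\<bar>theta_word \<theta> \<omega> x - theta_word \<theta> \<omega> y\<bar> / \<bar>x - y\<bar> | \<omega> x y.
            \<omega> \<in> words B \<nu> \<and> x \<in> H \<and> y \<in> H \<and> x \<noteq> y})"

end

theory Submission
  imports Defs
begin


lemma theta_word_append: "theta_word \<theta> (u @ v) = theta_word \<theta> v \<circ> theta_word \<theta> u"
  by (induction u) auto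

lemma theta_word_snoc: "theta_word \<theta> (u @ [\<beta>]) x = \<theta> \<beta> (theta_word \<theta> u x)"
  by (simp add: theta_word_append)

definition dW :: "('b \<Rightarrow> real \<Rightarrow> real) \<Rightarrow> ('b \<Rightarrow> real \<Rightarrow> real) \<Rightarrow> 'b list \<Rightarrow> real \<Rightarrow> real" where
  "dW \<theta> t1 \<omega> x = (\<Prod>i<length \<omega>. t1 (\<omega>!i) (theta_word \<theta> (take i \<omega>) x))"

lemma dW_Nil[simp]: "dW \<theta> t1 [] x = 1" by (simp add: dW_def)

lemma dW_snoc: "dW \<theta> t1 (\<omega> @ [\<beta>]) x = t1 \<beta> (theta_word \<theta> \<omega> x) * dW \<theta> t1 \<omega> x"
proof -
  have "dW \<theta> t1 (\<omega> @ [\<beta>]) x = (\<Prod>i<Suc (length \<omega>). t1 ((\<omega>@[\<beta>])!i) (theta_word \<theta> (take i (\<omega>@[\<beta>])) x))"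
    by (simp add: dW_def)
  also have "\<dots> = (\<Prod>i<length \<omega>. t1 ((\<omega>@[\<beta>])!i) (theta_word \<theta> (take i (\<omega>@[\<beta>])) x)) * t1 \<beta> (theta_word \<theta> \<omega> x)"
    by (simp add: prod.lessThan_Suc)
  also have "(\<Prod>i<length \<omega>. t1 ((\<omega>@[\<beta>])!i) (theta_word \<theta> (take i (\<omega>@[\<beta>])) x)) = dW \<theta> t1 \<omega> x"
    unfolding dW_def by (rule prod.cong) (auto simp: nth_append)
  finally show ?thesis by simp
qed

definition e2W :: "('b \<Rightarrow> real \<Rightarrow> real) \<Rightarrow> ('b \<Rightarrow> real \<Rightarrow> real) \<Rightarrow> ('b \<Rightarrow> real \<Rightarrow> real) \<Rightarrow> 'b list \<Rightarrow> real \<Rightarrow> real" where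
  "e2W \<theta> t1 t2 \<omega> x = (\<Sum>l<length \<omega>. t2 (\<omega>!l) (theta_word \<theta> (take l \<omega>) x) * (dW \<theta> t1 (take l \<omega>) x)\<^sup>2
       * dW \<theta> t1 (drop (Suc l) \<omega>) (theta_word \<theta> (take (Suc l) \<omega>) x))"

lemma e2W_Nil[simp]: "e2W \<theta> t1 t2 [] x = 0" by (simp add: e2W_def)

lemma e2W_snoc: "e2W \<theta> t1 t2 (\<omega> @ [\<beta>]) x =
   t2 \<beta> (theta_word \<theta> \<omega> x) * (dW \<theta> t1 \<omega> x)\<^sup>2 + t1 \<beta> (theta_word \<theta> \<omega> x) * e2W \<theta> t1 t2 \<omega> x"
proof -
  let ?f = "\<lambda>l. t2 ((\<omega>@[\<beta>])!l) (theta_word \<theta> (take l (\<omega>@[\<beta>])) x) * (dW \<theta> t1 (take l (\<omega>@[\<beta>])) x)\<^sup>2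
       * dW \<theta> t1 (drop (Suc l) (\<omega>@[\<beta>])) (theta_word \<theta> (take (Suc l) (\<omega>@[\<beta>])) x)"
  have "e2W \<theta> t1 t2 (\<omega> @ [\<beta>]) x = (\<Sum>l<Suc (length \<omega>). ?f l)" by (simp add: e2W_def)
  also have "\<dots> = (\<Sum>l<length \<omega>. ?f l) + ?f (length \<omega>)" by simp
  also have "?f (length \<omega>) = t2 \<beta> (theta_word \<theta> \<omega> x) * (dW \<theta> t1 \<omega> x)\<^sup>2" by simp
  also have "(\<Sum>l<length \<omega>. ?f l) = t1 \<beta> (theta_word \<theta> \<omega> x) * e2W \<theta> t1 t2 \<omega> x"
    unfolding e2W_def sum_distrib_left
  proof (rule sum.cong[OF refl])
    fix l assume l: "l \<in> {..<length \<omega>}"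
    have dr: "drop (Suc l) (\<omega>@[\<beta>]) = drop (Suc l) \<omega> @ [\<beta>]" using l by simp
    have tw: "theta_word \<theta> (drop (Suc l) \<omega>) (theta_word \<theta> (take (Suc l) \<omega>) x) = theta_word \<theta> \<omega> x"
      using theta_word_append[of \<theta> "take (Suc l) \<omega>" "drop (Suc l) \<omega>"] by (simp add: fun_eq_iff)
    show "?f l = t1 \<beta> (theta_word \<theta> \<omega> x) * (t2 (\<omega> ! l) (theta_word \<theta> (take l \<omega>) x) * (dW \<theta> t1 (take l \<omega>) x)\<^sup>2 *
          dW \<theta> t1 (drop (Suc l) \<omega>) (theta_word \<theta> (take (Suc l) \<omega>) x))"
      using l by (simp add: dr dW_snoc tw nth_append)
  qed
  finally show ?thesis by simp
qed

definition AW :: "('b \<Rightarrow> real \<Rightarrow> real) \<Rightarrow> ('b \<Rightarrow> real \<Rightarrow> real) \<Rightarrow> ('b \<Rightarrow> real \<Rightarrow> real) \<Rightarrow> 'b list \<Rightarrow> real \<Rightarrow> real" where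
  "AW \<theta> t1 a \<omega> x = (\<Sum>i<length \<omega>. a (\<omega>!i) (theta_word \<theta> (take i \<omega>) x) * dW \<theta> t1 (take i \<omega>) x)"

lemma AW_Nil[simp]: "AW \<theta> t1 a [] x = 0" by (simp add: AW_def)

lemma AW_snoc: "AW \<theta> t1 a (\<omega> @ [\<beta>]) x = AW \<theta> t1 a \<omega> x + a \<beta> (theta_word \<theta> \<omega> x) * dW \<theta> t1 \<omega> x"
proof -
  have "AW \<theta> t1 a (\<omega> @ [\<beta>]) x = (\<Sum>i<Suc (length \<omega>). a ((\<omega>@[\<beta>])!i) (theta_word \<theta> (take i (\<omega>@[\<beta>])) x) * dW \<theta> t1 (take i (\<omega>@[\<beta>])) x)"
    by (simp add: AW_def)
  also have "\<dots> = (\<Sum>i<length \<omega>. a ((\<omega>@[\<beta>])!i) (theta_word \<theta> (take i (\<omega>@[\<beta>])) x) * dW \<theta> t1 (take i (\<omega>@[\<beta>])) x) + a \<beta> (theta_word \<theta> \<omega> x) * dW \<theta> t1 \<omega> x"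
    by simp
  also have "(\<Sum>i<length \<omega>. a ((\<omega>@[\<beta>])!i) (theta_word \<theta> (take i (\<omega>@[\<beta>])) x) * dW \<theta> t1 (take i (\<omega>@[\<beta>])) x) = AW \<theta> t1 a \<omega> x"
    unfolding AW_def by (rule sum.cong) (auto simp: nth_append)
  finally show ?thesis .
qed

definition BW :: "('b \<Rightarrow> real \<Rightarrow> real) \<Rightarrow> ('b \<Rightarrow> real \<Rightarrow> real) \<Rightarrow> ('b \<Rightarrow> real \<Rightarrow> real) \<Rightarrow> ('b \<Rightarrow> real \<Rightarrow> real) \<Rightarrow> ('b \<Rightarrow> real \<Rightarrow> real) \<Rightarrow> 'b list \<Rightarrow> real \<Rightarrow> real" where
  "BW \<theta> t1 t2 a g \<omega> x = (\<Sum>i<length \<omega>. g (\<omega>!i) (theta_word \<theta> (take i \<omega>) x) * (dW \<theta> t1 (take i \<omega>) x)\<^sup>2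
      + a (\<omega>!i) (theta_word \<theta> (take i \<omega>) x) * e2W \<theta> t1 t2 (take i \<omega>) x)"

lemma BW_Nil[simp]: "BW \<theta> t1 t2 a g [] x = 0" by (simp add: BW_def)

lemma BW_snoc: "BW \<theta> t1 t2 a g (\<omega> @ [\<beta>]) x = BW \<theta> t1 t2 a g \<omega> x
   + g \<beta> (theta_word \<theta> \<omega> x) * (dW \<theta> t1 \<omega> x)\<^sup>2 + a \<beta> (theta_word \<theta> \<omega> x) * e2W \<theta> t1 t2 \<omega> x"
proof -
  let ?f = "\<lambda>\<omega>' i. g (\<omega>'!i) (theta_word \<theta> (take i \<omega>') x) * (dW \<theta> t1 (take i \<omega>') x)\<^sup>2
      + a (\<omega>'!i) (theta_word \<theta> (take i \<omega>') x) * e2W \<theta> t1 t2 (take i \<omega>') x"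
  have "BW \<theta> t1 t2 a g (\<omega> @ [\<beta>]) x = (\<Sum>i<Suc (length \<omega>). ?f (\<omega>@[\<beta>]) i)" by (simp add: BW_def)
  also have "\<dots> = (\<Sum>i<length \<omega>. ?f (\<omega>@[\<beta>]) i) + ?f (\<omega>@[\<beta>]) (length \<omega>)" by simp
  also have "(\<Sum>i<length \<omega>. ?f (\<omega>@[\<beta>]) i) = BW \<theta> t1 t2 a g \<omega> x"
    unfolding BW_def by (rule sum.cong) (auto simp: nth_append)
  finally show ?thesis by simp
qed



lemma theta_word_in:
  assumes "\<forall>\<beta>\<in>B. \<theta> \<beta> ` H \<subseteq> H" "set \<omega> \<subseteq> B" "x \<in> H"
  shows "theta_word \<theta> \<omega> x \<in> H"
  using assms(2,3)
proof (induction \<omega> arbitrary: x)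
  case Nil then show ?case by simp
next
  case (Cons j \<omega>)
  then have "\<theta> j x \<in> H" using assms(1) by auto
  then show ?case using Cons by simp
qed

lemma iterate_bound:
  fixes Q :: "'b list \<Rightarrow> real \<Rightarrow> real" and p :: "'b \<Rightarrow> real \<Rightarrow> real"
  assumes maps: "\<forall>\<beta>\<in>B. \<theta> \<beta> ` H \<subseteq> H"
    and p_nn: "\<And>\<beta> y. \<beta> \<in> B \<Longrightarrow> y \<in> H \<Longrightarrow> p \<beta> y \<ge> 0"
    and p_sum: "\<And>y. y \<in> H \<Longrightarrow> (\<Sum>\<beta>\<in>B. p \<beta> y) = 1"
    and rec: "\<And>\<omega> x. set \<omega> \<subseteq> B \<Longrightarrow> x \<in> H \<Longrightarrow>
        Q \<omega> x = (\<Sum>\<beta>\<in>B. p \<beta> (theta_word \<theta> \<omega> x) * Q (\<omega> @ [\<beta>]) x)"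
    and top: "\<And>\<omega> x. \<omega> \<in> words B N \<Longrightarrow> x \<in> H \<Longrightarrow> Q \<omega> x \<le> R"
  shows "\<And>x. x \<in> H \<Longrightarrow> Q [] x \<le> R"
proof -
  have main: "\<forall>\<omega>. length \<omega> + k = N \<longrightarrow> set \<omega> \<subseteq> B \<longrightarrow> (\<forall>x\<in>H. Q \<omega> x \<le> R)" for k
  proof (induction k)
    case 0 then show ?case using top by (auto simp: words_def)
  next
    case (Suc k)
    show ?case
    proof (intro allI impI ballI)
      fix \<omega> x assume l: "length \<omega> + Suc k = N" and s: "set \<omega> \<subseteq> B" and x: "x \<in> H"
      let ?y = "theta_word \<theta> \<omega> x"
      have y: "?y \<in> H" using theta_word_in[OF maps s x] .
      have "Q \<omega> x = (\<Sum>\<beta>\<in>B. p \<beta> ?y * Q (\<omega> @ [\<beta>]) x)" using rec s x by blast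
      also have "\<dots> \<le> (\<Sum>\<beta>\<in>B. p \<beta> ?y * R)"
      proof (rule sum_mono)
        fix \<beta> assume b: "\<beta> \<in> B"
        have "Q (\<omega> @ [\<beta>]) x \<le> R" using Suc.IH l s b x by auto
        then show "p \<beta> ?y * Q (\<omega> @ [\<beta>]) x \<le> p \<beta> ?y * R" using p_nn[OF b y] by (simp add: mult_left_mono)
      qed
      also have "\<dots> = R" using p_sum[OF y] by (simp add: sum_distrib_right[symmetric])
      finally show "Q \<omega> x \<le> R" .
    qed
  qed
  fix x assume "x \<in> H"
  then show "Q [] x \<le> R" using main[of N] by auto
qed

lemma iterate_bound_ge:
  fixes Q :: "'b list \<Rightarrow> real \<Rightarrow> real" and p :: "'b \<Rightarrow> real \<Rightarrow> real"
  assumes maps: "\<forall>\<beta>\<in>B. \<theta> \<beta> ` H \<subseteq> H"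
    and p_nn: "\<And>\<beta> y. \<beta> \<in> B \<Longrightarrow> y \<in> H \<Longrightarrow> p \<beta> y \<ge> 0"
    and p_sum: "\<And>y. y \<in> H \<Longrightarrow> (\<Sum>\<beta>\<in>B. p \<beta> y) = 1"
    and rec: "\<And>\<omega> x. set \<omega> \<subseteq> B \<Longrightarrow> x \<in> H \<Longrightarrow>
        Q \<omega> x = (\<Sum>\<beta>\<in>B. p \<beta> (theta_word \<theta> \<omega> x) * Q (\<omega> @ [\<beta>]) x)"
    and top: "\<And>\<omega> x. \<omega> \<in> words B N \<Longrightarrow> x \<in> H \<Longrightarrow> Q \<omega> x \<ge> R"
  shows "\<And>x. x \<in> H \<Longrightarrow> Q [] x \<ge> R"
proof -
  fix x assume x: "x \<in> H"
  have "(\<lambda>\<omega> x. - Q \<omega> x) [] x \<le> - R"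
    apply (rule iterate_bound[where p=p and B=B and \<theta>=\<theta> and H=H and N=N, OF maps p_nn p_sum _ _ x])
      apply assumption+
    subgoal for \<omega> x using rec[of \<omega> x] by (simp add: sum_negf[symmetric])
    subgoal for \<omega> x using top[of \<omega> x] by simp
    done
  then show "Q [] x \<ge> R" by simp
qed

lemma Pw_rec:
  fixes p :: "'b \<Rightarrow> real \<Rightarrow> real"
  assumes p_sum: "(\<Sum>\<beta>\<in>B. p \<beta> y) = 1"
    and y: "y = theta_word \<theta> \<omega> x"
    and wy: "w y = (\<Sum>\<beta>\<in>B. p \<beta> y * (s * a \<beta> y + t1 \<beta> y * w (\<theta> \<beta> y)))"
  shows "s * AW \<theta> t1 a \<omega> x + dW \<theta> t1 \<omega> x * w (theta_word \<theta> \<omega> x)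
    = (\<Sum>\<beta>\<in>B. p \<beta> y * (s * AW \<theta> t1 a (\<omega>@[\<beta>]) x + dW \<theta> t1 (\<omega>@[\<beta>]) x * w (theta_word \<theta> (\<omega>@[\<beta>]) x)))"
proof -
  let ?A = "AW \<theta> t1 a \<omega> x" and ?d = "dW \<theta> t1 \<omega> x"
  have "s * ?A + ?d * w y = (\<Sum>\<beta>\<in>B. p \<beta> y * (s * ?A)) + (\<Sum>\<beta>\<in>B. p \<beta> y * (?d * (s * a \<beta> y + t1 \<beta> y * w (\<theta> \<beta> y))))"
  proof -
    have 1: "s * ?A = (\<Sum>\<beta>\<in>B. p \<beta> y * (s * ?A))" by (simp add: sum_distrib_right[symmetric] p_sum)
    have 2: "?d * w y = (\<Sum>\<beta>\<in>B. p \<beta> y * (?d * (s * a \<beta> y + t1 \<beta> y * w (\<theta> \<beta> y))))"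
      unfolding wy sum_distrib_left by (rule sum.cong) auto
    show ?thesis using 1 2 by simp
  qed
  also have "\<dots> = (\<Sum>\<beta>\<in>B. p \<beta> y * (s * AW \<theta> t1 a (\<omega>@[\<beta>]) x + dW \<theta> t1 (\<omega>@[\<beta>]) x * w (theta_word \<theta> (\<omega>@[\<beta>]) x)))"
    unfolding sum.distrib[symmetric]
    by (rule sum.cong) (auto simp: AW_snoc dW_snoc theta_word_snoc y[symmetric] algebra_simps)
  finally show ?thesis using y by simp
qed

lemma Qz_rec:
  fixes p :: "'b \<Rightarrow> real \<Rightarrow> real"
  assumes p_sum: "(\<Sum>\<beta>\<in>B. p \<beta> y) = 1"
    and y: "y = theta_word \<theta> \<omega> x"
    and wy: "w y = (\<Sum>\<beta>\<in>B. p \<beta> y * (s * a \<beta> y + t1 \<beta> y * w (\<theta> \<beta> y)))"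
    and zy: "z y = (\<Sum>\<beta>\<in>B. p \<beta> y * (s * g \<beta> y + s\<^sup>2 * (a \<beta> y)\<^sup>2 + 2 * s * a \<beta> y * t1 \<beta> y * w (\<theta> \<beta> y)
            + t2 \<beta> y * w (\<theta> \<beta> y) + (t1 \<beta> y)\<^sup>2 * z (\<theta> \<beta> y)))"
  defines "Q \<equiv> \<lambda>\<omega> x. s * BW \<theta> t1 t2 a g \<omega> x + s\<^sup>2 * (AW \<theta> t1 a \<omega> x)\<^sup>2
      + (2 * s * AW \<theta> t1 a \<omega> x * dW \<theta> t1 \<omega> x + e2W \<theta> t1 t2 \<omega> x) * w (theta_word \<theta> \<omega> x)
      + (dW \<theta> t1 \<omega> x)\<^sup>2 * z (theta_word \<theta> \<omega> x)"
  shows "Q \<omega> x = (\<Sum>\<beta>\<in>B. p \<beta> y * Q (\<omega>@[\<beta>]) x)"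
proof -
  let ?A = "AW \<theta> t1 a \<omega> x" and ?d = "dW \<theta> t1 \<omega> x" and ?B = "BW \<theta> t1 t2 a g \<omega> x" and ?e = "e2W \<theta> t1 t2 \<omega> x"
  have "Q \<omega> x = (\<Sum>\<beta>\<in>B. p \<beta> y * (s * ?B + s\<^sup>2 * ?A\<^sup>2))
       + (\<Sum>\<beta>\<in>B. p \<beta> y * ((2 * s * ?A * ?d + ?e) * (s * a \<beta> y + t1 \<beta> y * w (\<theta> \<beta> y))))
       + (\<Sum>\<beta>\<in>B. p \<beta> y * (?d\<^sup>2 * (s * g \<beta> y + s\<^sup>2 * (a \<beta> y)\<^sup>2 + 2 * s * a \<beta> y * t1 \<beta> y * w (\<theta> \<beta> y)
            + t2 \<beta> y * w (\<theta> \<beta> y) + (t1 \<beta> y)\<^sup>2 * z (\<theta> \<beta> y))))"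
  proof -
    have 1: "s * ?B + s\<^sup>2 * ?A\<^sup>2 = (\<Sum>\<beta>\<in>B. p \<beta> y * (s * ?B + s\<^sup>2 * ?A\<^sup>2))"
      by (simp add: sum_distrib_right[symmetric] p_sum)
    have 2: "(2 * s * ?A * ?d + ?e) * w y = (\<Sum>\<beta>\<in>B. p \<beta> y * ((2 * s * ?A * ?d + ?e) * (s * a \<beta> y + t1 \<beta> y * w (\<theta> \<beta> y))))"
      unfolding wy sum_distrib_left by (rule sum.cong) auto
    have 3: "?d\<^sup>2 * z y = (\<Sum>\<beta>\<in>B. p \<beta> y * (?d\<^sup>2 * (s * g \<beta> y + s\<^sup>2 * (a \<beta> y)\<^sup>2 + 2 * s * a \<beta> y * t1 \<beta> y * w (\<theta> \<beta> y)
            + t2 \<beta> y * w (\<theta> \<beta> y) + (t1 \<beta> y)\<^sup>2 * z (\<theta> \<beta> y))))"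
      unfolding zy sum_distrib_left by (rule sum.cong) auto
    show ?thesis unfolding Q_def y[symmetric] using 1 2 3 by simp
  qed
  also have "\<dots> = (\<Sum>\<beta>\<in>B. p \<beta> y * Q (\<omega>@[\<beta>]) x)"
    unfolding sum.distrib[symmetric]
    by (rule sum.cong) (auto simp: Q_def AW_snoc dW_snoc BW_snoc e2W_snoc theta_word_snoc y[symmetric] algebra_simps power2_eq_square)
  finally show ?thesis .
qed



lemma deriv_T:
  assumes opn: "open H" and maps: "\<forall>\<beta>\<in>B. \<theta> \<beta> ` H \<subseteq> H"
    and der: "\<And>\<beta> y. \<beta> \<in> B \<Longrightarrow> y \<in> H \<Longrightarrow> (\<theta> \<beta> has_real_derivative t1 \<beta> y) (at y)"
    and s: "set \<omega> \<subseteq> B" and x: "x \<in> H"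
  shows "(theta_word \<theta> \<omega> has_real_derivative dW \<theta> t1 \<omega> x) (at x)"
  using s
proof (induction \<omega> rule: rev_induct)
  case Nil
  then show ?case by (simp add: id_def)
next
  case (snoc \<beta> \<omega>)
  have b: "\<beta> \<in> B" and s': "set \<omega> \<subseteq> B" using snoc.prems by auto
  have y: "theta_word \<theta> \<omega> x \<in> H" using theta_word_in[OF maps s' x] .
  have "((\<theta> \<beta> \<circ> theta_word \<theta> \<omega>) has_real_derivative t1 \<beta> (theta_word \<theta> \<omega> x) * dW \<theta> t1 \<omega> x) (at x)"
    using DERIV_chain[OF der[OF b y] snoc.IH[OF s']] .
  moreover have "theta_word \<theta> (\<omega> @ [\<beta>]) = \<theta> \<beta> \<circ> theta_word \<theta> \<omega>" by (simp add: theta_word_append)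
  ultimately show ?case by (simp add: dW_snoc comp_def)
qed

lemma dW_le_eps:
  assumes opn: "open H" and maps: "\<forall>\<beta>\<in>B. \<theta> \<beta> ` H \<subseteq> H"
    and der: "\<And>\<beta> y. \<beta> \<in> B \<Longrightarrow> y \<in> H \<Longrightarrow> (\<theta> \<beta> has_real_derivative t1 \<beta> y) (at y)"
    and bdd: "bdd_above {\<bar>theta_word \<theta> \<omega> x - theta_word \<theta> \<omega> y\<bar> / \<bar>x - y\<bar> | \<omega> x y.
            \<omega> \<in> words B (length \<omega>0) \<and> x \<in> H \<and> y \<in> H \<and> x \<noteq> y}"
    and s: "set \<omega>0 \<subseteq> B" and x: "x \<in> H"
  shows "\<bar>dW \<theta> t1 \<omega>0 x\<bar> \<le> eps_seq B \<theta> H (length \<omega>0)"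
proof (cases "length \<omega>0 = 0")
  case True then show ?thesis by (simp add: eps_seq_def)
next
  case False
  let ?S = "{\<bar>theta_word \<theta> \<omega> x - theta_word \<theta> \<omega> y\<bar> / \<bar>x - y\<bar> | \<omega> x y.
            \<omega> \<in> words B (length \<omega>0) \<and> x \<in> H \<and> y \<in> H \<and> x \<noteq> y}"
  have e: "eps_seq B \<theta> H (length \<omega>0) = Sup ?S" using False by (simp add: eps_seq_def)
  have d: "(theta_word \<theta> \<omega>0 has_real_derivative dW \<theta> t1 \<omega>0 x) (at x)"
    by (rule deriv_T[OF opn maps der s x])
  then have "((\<lambda>y. (theta_word \<theta> \<omega>0 y - theta_word \<theta> \<omega>0 x) / (y - x)) \<longlongrightarrow> dW \<theta> t1 \<omega>0 x) (at x)"
    by (simp add: has_field_derivative_iff)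
  then have t: "((\<lambda>y. \<bar>(theta_word \<theta> \<omega>0 y - theta_word \<theta> \<omega>0 x) / (y - x)\<bar>) \<longlongrightarrow> \<bar>dW \<theta> t1 \<omega>0 x\<bar>) (at x)"
    by (rule tendsto_rabs)
  have ev: "eventually (\<lambda>y. \<bar>(theta_word \<theta> \<omega>0 y - theta_word \<theta> \<omega>0 x) / (y - x)\<bar> \<le> Sup ?S) (at x)"
  proof -
    have "eventually (\<lambda>y. y \<in> H) (at x)" using opn x by (rule eventually_at_in_open')
    moreover have "eventually (\<lambda>y. y \<noteq> x) (at x)" by (rule eventually_neq_at_within)
    ultimately show ?thesis
    proof eventually_elim
      case (elim y)
      have "\<bar>(theta_word \<theta> \<omega>0 y - theta_word \<theta> \<omega>0 x) / (y - x)\<bar> \<in> ?S"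
        using elim s x by (auto simp: words_def abs_divide intro!: exI[of _ \<omega>0])
      then show ?case by (rule cSup_upper[OF _ bdd])
    qed
  qed
  have "\<bar>dW \<theta> t1 \<omega>0 x\<bar> \<le> Sup ?S"
    by (rule tendsto_upperbound[OF t ev]) simp
  then show ?thesis using e by simp
qed

definition convs :: "(nat \<Rightarrow> real) \<Rightarrow> (nat \<Rightarrow> real) \<Rightarrow> nat \<Rightarrow> real" where
  "convs x y N = (\<Sum>l<N. x l * y (N - Suc l))"

lemma convs_Suc: "convs x y (Suc k) = (\<Sum>i\<le>k. x i * y (k - i))"
  by (simp add: convs_def lessThan_Suc_atMost)

lemma convs_props:
  assumes xn: "\<And>k. x k \<ge> 0" and yn: "\<And>k. y k \<ge> 0" and sx: "summable x" and sy: "summable y"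
  shows "\<And>N. (\<Sum>i<N. convs x y i) \<le> suminf x * suminf y" and "convs x y \<longlonglongrightarrow> 0"
proof -
  have ax: "summable (\<lambda>k. norm (x k))" using sx xn by simp
  have ay: "summable (\<lambda>k. norm (y k))" using sy yn by simp
  have cs: "(\<lambda>k. \<Sum>i\<le>k. x i * y (k - i)) sums (suminf x * suminf y)"
    using Cauchy_product_sums[OF ax ay] .
  have nn: "\<And>k. (\<Sum>i\<le>k. x i * y (k - i)) \<ge> 0" using xn yn by (simp add: sum_nonneg)
  have cnn: "\<And>k. convs x y k \<ge> 0" using xn yn by (simp add: convs_def sum_nonneg)
  fix N
  show "(\<Sum>i<N. convs x y i) \<le> suminf x * suminf y"
  proof (cases N)
    case 0 then show ?thesis using xn yn sx sy by (simp add: suminf_nonneg)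
  next
    case (Suc M)
    have "(\<Sum>i<N. convs x y i) = (\<Sum>i<Suc M. convs x y i)" using Suc by simp
    also have "\<dots> = (\<Sum>k<M. convs x y (Suc k))" by (simp only: sum.lessThan_Suc_shift) (simp add: convs_def)
    also have "\<dots> = (\<Sum>k<M. \<Sum>i\<le>k. x i * y (k - i))" by (simp add: convs_Suc)
    also have "\<dots> \<le> suminf x * suminf y"
      using sum_le_suminf[of "\<lambda>k. \<Sum>i\<le>k. x i * y (k - i)" "{..<M}"] cs nn by (auto simp: sums_iff)
    finally show ?thesis .
  qed
next
  have ax: "summable (\<lambda>k. norm (x k))" using sx xn by simp
  have ay: "summable (\<lambda>k. norm (y k))" using sy yn by simp
  have "summable (\<lambda>k. \<Sum>i\<le>k. x i * y (k - i))" using summable_Cauchy_product[OF ax ay] .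
  then have "(\<lambda>k. \<Sum>i\<le>k. x i * y (k - i)) \<longlonglongrightarrow> 0" by (rule summable_LIMSEQ_zero)
  then have "(\<lambda>k. convs x y (Suc k)) \<longlonglongrightarrow> 0" by (simp add: convs_Suc)
  then show "convs x y \<longlonglongrightarrow> 0" using LIMSEQ_imp_Suc by blast
qed



context
  fixes B :: "'b set" and H :: "real set" and \<theta> t1 t2 a g :: "'b \<Rightarrow> real \<Rightarrow> real"
    and \<epsilon> :: "nat \<Rightarrow> real" and M0 C1 C2 :: real
  assumes maps: "\<forall>\<beta>\<in>B. \<theta> \<beta> ` H \<subseteq> H"
    and dWb: "\<And>\<omega> x. set \<omega> \<subseteq> B \<Longrightarrow> x \<in> H \<Longrightarrow> \<bar>dW \<theta> t1 \<omega> x\<bar> \<le> \<epsilon> (length \<omega>)"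
    and t2b: "\<And>\<beta> y. \<beta> \<in> B \<Longrightarrow> y \<in> H \<Longrightarrow> \<bar>t2 \<beta> y\<bar> \<le> M0"
    and ab: "\<And>\<beta> y. \<beta> \<in> B \<Longrightarrow> y \<in> H \<Longrightarrow> \<bar>a \<beta> y\<bar> \<le> C1"
    and gup: "\<And>\<beta> y. \<beta> \<in> B \<Longrightarrow> y \<in> H \<Longrightarrow> g \<beta> y \<le> C2"
    and glo: "\<And>\<beta> y. \<beta> \<in> B \<Longrightarrow> y \<in> H \<Longrightarrow> g \<beta> y \<ge> -(C2 + C1\<^sup>2)"
    and C2nn: "C2 \<ge> 0"
begin

lemma e2W_bound:
  assumes s: "set \<omega> \<subseteq> B" and x: "x \<in> H"
  shows "\<bar>e2W \<theta> t1 t2 \<omega> x\<bar> \<le> M0 * convs (\<lambda>k. (\<epsilon> k)\<^sup>2) \<epsilon> (length \<omega>)"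
proof -
  have "\<bar>e2W \<theta> t1 t2 \<omega> x\<bar> \<le> (\<Sum>l<length \<omega>. \<bar>t2 (\<omega>!l) (theta_word \<theta> (take l \<omega>) x) * (dW \<theta> t1 (take l \<omega>) x)\<^sup>2
       * dW \<theta> t1 (drop (Suc l) \<omega>) (theta_word \<theta> (take (Suc l) \<omega>) x)\<bar>)"
    unfolding e2W_def by (rule sum_abs)
  also have "\<dots> \<le> (\<Sum>l<length \<omega>. M0 * ((\<epsilon> l)\<^sup>2 * \<epsilon> (length \<omega> - Suc l)))"
  proof (rule sum_mono)
    fix l assume l: "l \<in> {..<length \<omega>}"
    have l': "l < length \<omega>" using l by simp
    have sl: "set (take l \<omega>) \<subseteq> B" "set (take (Suc l) \<omega>) \<subseteq> B" "set (drop (Suc l) \<omega>) \<subseteq> B" "\<omega>!l \<in> B"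
      using s set_take_subset[of l \<omega>] set_take_subset[of "Suc l" \<omega>] set_drop_subset[of "Suc l" \<omega>] nth_mem[OF l'] by blast+
    have y1: "theta_word \<theta> (take l \<omega>) x \<in> H" by (rule theta_word_in[OF maps sl(1) x])
    have y2: "theta_word \<theta> (take (Suc l) \<omega>) x \<in> H" by (rule theta_word_in[OF maps sl(2) x])
    have 1: "\<bar>t2 (\<omega>!l) (theta_word \<theta> (take l \<omega>) x)\<bar> \<le> M0" by (rule t2b[OF sl(4) y1])
    have 2: "\<bar>dW \<theta> t1 (take l \<omega>) x\<bar> \<le> \<epsilon> l" using dWb[OF sl(1) x] l by simp
    have 3: "\<bar>dW \<theta> t1 (drop (Suc l) \<omega>) (theta_word \<theta> (take (Suc l) \<omega>) x)\<bar> \<le> \<epsilon> (length \<omega> - Suc l)"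
      using dWb[OF sl(3) y2] by simp
    have d2: "(dW \<theta> t1 (take l \<omega>) x)\<^sup>2 \<le> (\<epsilon> l)\<^sup>2"
      using power_mono[OF 2 abs_ge_zero, of 2] by simp
    have "\<bar>t2 (\<omega>!l) (theta_word \<theta> (take l \<omega>) x) * (dW \<theta> t1 (take l \<omega>) x)\<^sup>2
       * dW \<theta> t1 (drop (Suc l) \<omega>) (theta_word \<theta> (take (Suc l) \<omega>) x)\<bar>
       = \<bar>t2 (\<omega>!l) (theta_word \<theta> (take l \<omega>) x)\<bar> * (dW \<theta> t1 (take l \<omega>) x)\<^sup>2
       * \<bar>dW \<theta> t1 (drop (Suc l) \<omega>) (theta_word \<theta> (take (Suc l) \<omega>) x)\<bar>" by (simp add: abs_mult)
    also have "\<dots> \<le> M0 * (\<epsilon> l)\<^sup>2 * \<epsilon> (length \<omega> - Suc l)"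
      using order_trans[OF abs_ge_zero 1] by (intro mult_mono 1 d2 3) auto
    finally show "\<bar>t2 (\<omega>!l) (theta_word \<theta> (take l \<omega>) x) * (dW \<theta> t1 (take l \<omega>) x)\<^sup>2
       * dW \<theta> t1 (drop (Suc l) \<omega>) (theta_word \<theta> (take (Suc l) \<omega>) x)\<bar> \<le> M0 * ((\<epsilon> l)\<^sup>2 * \<epsilon> (length \<omega> - Suc l))"
      by (simp add: mult.assoc)
  qed
  also have "\<dots> = M0 * convs (\<lambda>k. (\<epsilon> k)\<^sup>2) \<epsilon> (length \<omega>)"
    by (simp add: convs_def sum_distrib_left)
  finally show ?thesis .
qed

lemma AW_bound:
  assumes s: "set \<omega> \<subseteq> B" and x: "x \<in> H"
  shows "\<bar>AW \<theta> t1 a \<omega> x\<bar> \<le> C1 * (\<Sum>i<length \<omega>. \<epsilon> i)"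
proof -
  have "\<bar>AW \<theta> t1 a \<omega> x\<bar> \<le> (\<Sum>i<length \<omega>. \<bar>a (\<omega>!i) (theta_word \<theta> (take i \<omega>) x) * dW \<theta> t1 (take i \<omega>) x\<bar>)"
    unfolding AW_def by (rule sum_abs)
  also have "\<dots> \<le> (\<Sum>i<length \<omega>. C1 * \<epsilon> i)"
  proof (rule sum_mono)
    fix l assume l: "l \<in> {..<length \<omega>}"
    have l': "l < length \<omega>" using l by simp
    have sl: "set (take l \<omega>) \<subseteq> B" "\<omega>!l \<in> B"
      using s set_take_subset[of l \<omega>] nth_mem[OF l'] by blast+
    have y1: "theta_word \<theta> (take l \<omega>) x \<in> H" by (rule theta_word_in[OF maps sl(1) x])
    have 1: "\<bar>a (\<omega>!l) (theta_word \<theta> (take l \<omega>) x)\<bar> \<le> C1" by (rule ab[OF sl(2) y1])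
    have 2: "\<bar>dW \<theta> t1 (take l \<omega>) x\<bar> \<le> \<epsilon> l" using dWb[OF sl(1) x] l by simp
    show "\<bar>a (\<omega>!l) (theta_word \<theta> (take l \<omega>) x) * dW \<theta> t1 (take l \<omega>) x\<bar> \<le> C1 * \<epsilon> l"
      unfolding abs_mult by (intro mult_mono 1 2) (auto intro: order_trans[OF abs_ge_zero 1])
  qed
  finally show ?thesis by (simp add: sum_distrib_left)
qed

lemma BW_bounds:
  assumes s: "set \<omega> \<subseteq> B" and x: "x \<in> H"
  shows "BW \<theta> t1 t2 a g \<omega> x \<le> C2 * (\<Sum>i<length \<omega>. (\<epsilon> i)\<^sup>2) + C1 * M0 * (\<Sum>i<length \<omega>. convs (\<lambda>k. (\<epsilon> k)\<^sup>2) \<epsilon> i)"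
    and "BW \<theta> t1 t2 a g \<omega> x \<ge> - ((C2 + C1\<^sup>2) * (\<Sum>i<length \<omega>. (\<epsilon> i)\<^sup>2) + C1 * M0 * (\<Sum>i<length \<omega>. convs (\<lambda>k. (\<epsilon> k)\<^sup>2) \<epsilon> i))"
proof -
  have key: "g (\<omega>!l) (theta_word \<theta> (take l \<omega>) x) * (dW \<theta> t1 (take l \<omega>) x)\<^sup>2 \<le> C2 * (\<epsilon> l)\<^sup>2
     \<and> g (\<omega>!l) (theta_word \<theta> (take l \<omega>) x) * (dW \<theta> t1 (take l \<omega>) x)\<^sup>2 \<ge> - ((C2 + C1\<^sup>2) * (\<epsilon> l)\<^sup>2)
     \<and> \<bar>a (\<omega>!l) (theta_word \<theta> (take l \<omega>) x) * e2W \<theta> t1 t2 (take l \<omega>) x\<bar> \<le> C1 * M0 * convs (\<lambda>k. (\<epsilon> k)\<^sup>2) \<epsilon> l"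
    if l: "l < length \<omega>" for l
  proof -
    have l': "l < length \<omega>" using l by simp
    have sl: "set (take l \<omega>) \<subseteq> B" "\<omega>!l \<in> B"
      using s set_take_subset[of l \<omega>] nth_mem[OF l'] by blast+
    have y1: "theta_word \<theta> (take l \<omega>) x \<in> H" by (rule theta_word_in[OF maps sl(1) x])
    have 1: "\<bar>a (\<omega>!l) (theta_word \<theta> (take l \<omega>) x)\<bar> \<le> C1" by (rule ab[OF sl(2) y1])
    have 2: "\<bar>dW \<theta> t1 (take l \<omega>) x\<bar> \<le> \<epsilon> l" using dWb[OF sl(1) x] l by simp
    have d2: "(dW \<theta> t1 (take l \<omega>) x)\<^sup>2 \<le> (\<epsilon> l)\<^sup>2"
      using power_mono[OF 2 abs_ge_zero, of 2] by simp
    have 3: "\<bar>e2W \<theta> t1 t2 (take l \<omega>) x\<bar> \<le> M0 * convs (\<lambda>k. (\<epsilon> k)\<^sup>2) \<epsilon> l"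
      using e2W_bound[OF sl(1) x] l by simp
    have gu: "g (\<omega>!l) (theta_word \<theta> (take l \<omega>) x) \<le> C2" by (rule gup[OF sl(2) y1])
    have gl: "g (\<omega>!l) (theta_word \<theta> (take l \<omega>) x) \<ge> -(C2 + C1\<^sup>2)" by (rule glo[OF sl(2) y1])
    have C2: "C2 + C1\<^sup>2 \<ge> 0" using C2nn by simp
    let ?G = "g (\<omega>!l) (theta_word \<theta> (take l \<omega>) x)" and ?D = "(dW \<theta> t1 (take l \<omega>) x)\<^sup>2"
    have D0: "?D \<ge> 0" by simp
    have u: "?G * ?D \<le> C2 * (\<epsilon> l)\<^sup>2"
    proof -
      have "?G * ?D \<le> C2 * ?D" using gu D0 by (simp add: mult_right_mono)
      also have "\<dots> \<le> C2 * (\<epsilon> l)\<^sup>2" using C2nn d2 by (simp add: mult_left_mono)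
      finally show ?thesis .
    qed
    have lo: "?G * ?D \<ge> - ((C2 + C1\<^sup>2) * (\<epsilon> l)\<^sup>2)"
    proof -
      have "?G * ?D \<ge> -(C2 + C1\<^sup>2) * ?D" using gl D0 by (simp add: mult_right_mono)
      moreover have "(C2 + C1\<^sup>2) * ?D \<le> (C2 + C1\<^sup>2) * (\<epsilon> l)\<^sup>2" using C2 d2 by (simp add: mult_left_mono)
      ultimately show ?thesis by (simp add: algebra_simps)
    qed
    have e: "\<bar>a (\<omega>!l) (theta_word \<theta> (take l \<omega>) x) * e2W \<theta> t1 t2 (take l \<omega>) x\<bar> \<le> C1 * M0 * convs (\<lambda>k. (\<epsilon> k)\<^sup>2) \<epsilon> l"
      unfolding abs_mult mult.assoc by (intro mult_mono 1 3) (auto intro: order_trans[OF abs_ge_zero 1])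
    show ?thesis using u lo e by blast
  qed
  show "BW \<theta> t1 t2 a g \<omega> x \<le> C2 * (\<Sum>i<length \<omega>. (\<epsilon> i)\<^sup>2) + C1 * M0 * (\<Sum>i<length \<omega>. convs (\<lambda>k. (\<epsilon> k)\<^sup>2) \<epsilon> i)"
    unfolding BW_def sum_distrib_left sum.distrib[symmetric]
  proof (rule sum_mono)
    fix i assume "i \<in> {..<length \<omega>}"
    then have k: "i < length \<omega>" by simp
    from key[OF k] abs_le_D1 show "g (\<omega>!i) (theta_word \<theta> (take i \<omega>) x) * (dW \<theta> t1 (take i \<omega>) x)\<^sup>2
      + a (\<omega>!i) (theta_word \<theta> (take i \<omega>) x) * e2W \<theta> t1 t2 (take i \<omega>) x
      \<le> C2 * (\<epsilon> i)\<^sup>2 + C1 * M0 * convs (\<lambda>k. (\<epsilon> k)\<^sup>2) \<epsilon> i"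
      by (meson add_mono)
  qed
  show "BW \<theta> t1 t2 a g \<omega> x \<ge> - ((C2 + C1\<^sup>2) * (\<Sum>i<length \<omega>. (\<epsilon> i)\<^sup>2) + C1 * M0 * (\<Sum>i<length \<omega>. convs (\<lambda>k. (\<epsilon> k)\<^sup>2) \<epsilon> i))"
    unfolding BW_def sum_distrib_left sum.distrib[symmetric] minus_add_distrib sum_negf[symmetric]
  proof (rule sum_mono)
    fix i assume "i \<in> {..<length \<omega>}"
    then have k: "i < length \<omega>" by simp
    from key[OF k] show "- ((C2 + C1\<^sup>2) * (\<epsilon> i)\<^sup>2) + - (C1 * M0 * convs (\<lambda>k. (\<epsilon> k)\<^sup>2) \<epsilon> i) \<le>
      g (\<omega>!i) (theta_word \<theta> (take i \<omega>) x) * (dW \<theta> t1 (take i \<omega>) x)\<^sup>2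
      + a (\<omega>!i) (theta_word \<theta> (take i \<omega>) x) * e2W \<theta> t1 t2 (take i \<omega>) x"
      by (simp only: abs_le_iff) linarith
  qed
qed

end


lemma final_bounds:
  fixes B :: "'b set" and H :: "real set" and \<theta> t1 t2 a g p :: "'b \<Rightarrow> real \<Rightarrow> real"
    and \<epsilon> :: "nat \<Rightarrow> real" and M0 C1 C2 s W Z :: real and w z :: "real \<Rightarrow> real"
  assumes maps: "\<forall>\<beta>\<in>B. \<theta> \<beta> ` H \<subseteq> H"
    and dWb: "\<And>\<omega> x. set \<omega> \<subseteq> B \<Longrightarrow> x \<in> H \<Longrightarrow> \<bar>dW \<theta> t1 \<omega> x\<bar> \<le> \<epsilon> (length \<omega>)"
    and t2b: "\<And>\<beta> y. \<beta> \<in> B \<Longrightarrow> y \<in> H \<Longrightarrow> \<bar>t2 \<beta> y\<bar> \<le> M0"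
    and ab: "\<And>\<beta> y. \<beta> \<in> B \<Longrightarrow> y \<in> H \<Longrightarrow> \<bar>a \<beta> y\<bar> \<le> C1"
    and gup: "\<And>\<beta> y. \<beta> \<in> B \<Longrightarrow> y \<in> H \<Longrightarrow> g \<beta> y \<le> C2"
    and glo: "\<And>\<beta> y. \<beta> \<in> B \<Longrightarrow> y \<in> H \<Longrightarrow> g \<beta> y \<ge> -(C2 + C1\<^sup>2)"
    and C2nn: "C2 \<ge> 0" and C1nn: "C1 \<ge> 0" and M0nn: "M0 \<ge> 0"
    and p_nn: "\<And>\<beta> y. \<beta> \<in> B \<Longrightarrow> y \<in> H \<Longrightarrow> p \<beta> y \<ge> 0"
    and p_sum: "\<And>y. y \<in> H \<Longrightarrow> (\<Sum>\<beta>\<in>B. p \<beta> y) = 1"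
    and wy: "\<And>y. y \<in> H \<Longrightarrow> w y = (\<Sum>\<beta>\<in>B. p \<beta> y * (s * a \<beta> y + t1 \<beta> y * w (\<theta> \<beta> y)))"
    and zy: "\<And>y. y \<in> H \<Longrightarrow> z y = (\<Sum>\<beta>\<in>B. p \<beta> y * (s * g \<beta> y + s\<^sup>2 * (a \<beta> y)\<^sup>2 + 2 * s * a \<beta> y * t1 \<beta> y * w (\<theta> \<beta> y)
            + t2 \<beta> y * w (\<theta> \<beta> y) + (t1 \<beta> y)\<^sup>2 * z (\<theta> \<beta> y)))"
    and eps_nn: "\<And>k. \<epsilon> k \<ge> 0" and sum1: "summable \<epsilon>" and sum2: "summable (\<lambda>k. (\<epsilon> k)\<^sup>2)"
    and wb: "\<And>y. y \<in> H \<Longrightarrow> \<bar>w y\<bar> \<le> W"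
    and zb: "\<And>y. y \<in> H \<Longrightarrow> \<bar>z y\<bar> \<le> Z"
    and s0: "s \<ge> 0"
    and x: "x \<in> H"
  shows "z x \<le> s\<^sup>2 * C1\<^sup>2 * (suminf \<epsilon>)\<^sup>2 + s * (\<Sum>k. (\<epsilon> k)\<^sup>2) * (C2 + C1 * M0 * suminf \<epsilon>)"
    and "z x \<ge> - s * (\<Sum>k. (\<epsilon> k)\<^sup>2) * ((C2 + C1\<^sup>2) + C1 * M0 * suminf \<epsilon>)"
proof -
  define S1 where "S1 = suminf \<epsilon>"
  define S2 where "S2 = (\<Sum>k. (\<epsilon> k)\<^sup>2)"
  let ?cv = "convs (\<lambda>k. (\<epsilon> k)\<^sup>2) \<epsilon>"
  have e2nn: "\<And>k. (\<epsilon> k)\<^sup>2 \<ge> 0" by simp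
  have ps1: "\<And>N. (\<Sum>i<N. \<epsilon> i) \<le> S1" unfolding S1_def by (rule sum_le_suminf[OF sum1]) (auto simp: eps_nn)
  have ps2: "\<And>N. (\<Sum>i<N. (\<epsilon> i)\<^sup>2) \<le> S2" unfolding S2_def by (rule sum_le_suminf[OF sum2]) auto
  have psc: "\<And>N. (\<Sum>i<N. ?cv i) \<le> S2 * S1"
    unfolding S1_def S2_def by (rule convs_props(1)[OF e2nn eps_nn sum2 sum1])
  have cv0: "?cv \<longlonglongrightarrow> 0" by (rule convs_props(2)[OF e2nn eps_nn sum2 sum1])
  have eps0: "\<epsilon> \<longlonglongrightarrow> 0" by (rule summable_LIMSEQ_zero[OF sum1])
  have S1nn: "S1 \<ge> 0" unfolding S1_def using sum1 eps_nn by (simp add: suminf_nonneg)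
  have S2nn: "S2 \<ge> 0" unfolding S2_def using sum2 by (simp add: suminf_nonneg)
  have psi: "\<And>N. (\<Sum>i<N. \<epsilon> i) \<ge> 0" using eps_nn by (simp add: sum_nonneg)
  have cvnn: "\<And>N. ?cv N \<ge> 0" using eps_nn by (simp add: convs_def sum_nonneg)
  have AWb: "\<And>\<omega> y. set \<omega> \<subseteq> B \<Longrightarrow> y \<in> H \<Longrightarrow> \<bar>AW \<theta> t1 a \<omega> y\<bar> \<le> C1 * (\<Sum>i<length \<omega>. \<epsilon> i)"
    using AW_bound[where B=B and H=H and \<theta>=\<theta> and ?t1.0=t1 and ?t2.0=t2 and a=a and g=g and \<epsilon>=\<epsilon> and ?M0.0=M0 and ?C1.0=C1 and ?C2.0=C2, OF maps dWb t2b ab gup glo C2nn] by blast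
  have BWu: "\<And>\<omega> y. set \<omega> \<subseteq> B \<Longrightarrow> y \<in> H \<Longrightarrow> BW \<theta> t1 t2 a g \<omega> y \<le> C2 * (\<Sum>i<length \<omega>. (\<epsilon> i)\<^sup>2) + C1 * M0 * (\<Sum>i<length \<omega>. ?cv i)"
    using BW_bounds(1)[where B=B and H=H and \<theta>=\<theta> and ?t1.0=t1 and ?t2.0=t2 and a=a and g=g and \<epsilon>=\<epsilon> and ?M0.0=M0 and ?C1.0=C1 and ?C2.0=C2, OF maps dWb t2b ab gup glo C2nn] by blast
  have BWl: "\<And>\<omega> y. set \<omega> \<subseteq> B \<Longrightarrow> y \<in> H \<Longrightarrow> BW \<theta> t1 t2 a g \<omega> y \<ge> - ((C2 + C1\<^sup>2) * (\<Sum>i<length \<omega>. (\<epsilon> i)\<^sup>2) + C1 * M0 * (\<Sum>i<length \<omega>. ?cv i))"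
    using BW_bounds(2)[where B=B and H=H and \<theta>=\<theta> and ?t1.0=t1 and ?t2.0=t2 and a=a and g=g and \<epsilon>=\<epsilon> and ?M0.0=M0 and ?C1.0=C1 and ?C2.0=C2, OF maps dWb t2b ab gup glo C2nn] by blast
  have e2b: "\<And>\<omega> y. set \<omega> \<subseteq> B \<Longrightarrow> y \<in> H \<Longrightarrow> \<bar>e2W \<theta> t1 t2 \<omega> y\<bar> \<le> M0 * ?cv (length \<omega>)"
    using e2W_bound[where B=B and H=H and \<theta>=\<theta> and ?t1.0=t1 and ?t2.0=t2 and a=a and g=g and \<epsilon>=\<epsilon> and ?M0.0=M0 and ?C1.0=C1 and ?C2.0=C2, OF maps dWb t2b ab gup glo C2nn] by blast
  define Pw where "Pw = (\<lambda>\<omega> x. s * AW \<theta> t1 a \<omega> x + dW \<theta> t1 \<omega> x * w (theta_word \<theta> \<omega> x))"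
  have Pw_rec': "Pw \<omega> x = (\<Sum>\<beta>\<in>B. p \<beta> (theta_word \<theta> \<omega> x) * Pw (\<omega> @ [\<beta>]) x)"
    if "set \<omega> \<subseteq> B" "x \<in> H" for \<omega> x
  proof -
    have y: "theta_word \<theta> \<omega> x \<in> H" by (rule theta_word_in[OF maps that])
    show ?thesis unfolding Pw_def by (rule Pw_rec[where \<omega>=\<omega> and x=x and \<theta>=\<theta> and y="theta_word \<theta> \<omega> x" and p=p and w=w and s=s and a=a and ?t1.0=t1 and B=B, OF p_sum[OF y] refl wy[OF y]])
  qed
  have Pw_top: "\<bar>Pw \<omega> y\<bar> \<le> s * C1 * S1 + \<epsilon> N * W" if "\<omega> \<in> words B N" "y \<in> H" for \<omega> y N
  proof -
    have s: "set \<omega> \<subseteq> B" and l: "length \<omega> = N" using that by (auto simp: words_def)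
    have T: "theta_word \<theta> \<omega> y \<in> H" by (rule theta_word_in[OF maps s that(2)])
    have 1: "\<bar>AW \<theta> t1 a \<omega> y\<bar> \<le> C1 * S1"
      using AWb[OF s that(2)] mult_left_mono[OF ps1[of N] C1nn] l by simp
    have 2: "\<bar>dW \<theta> t1 \<omega> y\<bar> \<le> \<epsilon> N" using dWb[OF s that(2)] l by simp
    have 3: "\<bar>w (theta_word \<theta> \<omega> y)\<bar> \<le> W" by (rule wb[OF T])
    have "\<bar>Pw \<omega> y\<bar> \<le> s * \<bar>AW \<theta> t1 a \<omega> y\<bar> + \<bar>dW \<theta> t1 \<omega> y\<bar> * \<bar>w (theta_word \<theta> \<omega> y)\<bar>"
      unfolding Pw_def using s0 by (metis abs_mult abs_of_nonneg abs_triangle_ineq)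
    also have "\<dots> \<le> s * (C1 * S1) + \<epsilon> N * W"
      by (intro add_mono mult_left_mono mult_mono 1 2 3 s0) (auto simp: eps_nn)
    finally show ?thesis by simp
  qed
  have wB: "\<bar>w y\<bar> \<le> s * C1 * S1" if y: "y \<in> H" for y
  proof -
    have "\<bar>w y\<bar> \<le> s * C1 * S1 + \<epsilon> N * W" for N
    proof -
      have "Pw [] y \<le> s * C1 * S1 + \<epsilon> N * W"
        by (rule iterate_bound[where B=B and \<theta>=\<theta> and H=H and p=p and N=N, OF maps p_nn p_sum Pw_rec' _ y])
           (use Pw_top in \<open>auto simp: abs_le_iff\<close>)
      moreover have "- Pw [] y \<le> s * C1 * S1 + \<epsilon> N * W"
        using iterate_bound_ge[where B=B and \<theta>=\<theta> and H=H and p=p and N=N and Q=Pw and R="-(s * C1 * S1 + \<epsilon> N * W)",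
             OF maps p_nn p_sum Pw_rec' _ y] Pw_top by (force simp: abs_le_iff)
      ultimately show ?thesis by (simp add: Pw_def abs_le_iff)
    qed
    moreover have "(\<lambda>N. s * C1 * S1 + \<epsilon> N * W) \<longlonglongrightarrow> s * C1 * S1 + 0 * W"
      by (intro tendsto_intros eps0)
    ultimately show ?thesis by (intro LIMSEQ_le_const[of _ "s * C1 * S1"]) auto
  qed

  define Qz where "Qz = (\<lambda>\<omega> x. s * BW \<theta> t1 t2 a g \<omega> x + s\<^sup>2 * (AW \<theta> t1 a \<omega> x)\<^sup>2
      + (2 * s * AW \<theta> t1 a \<omega> x * dW \<theta> t1 \<omega> x + e2W \<theta> t1 t2 \<omega> x) * w (theta_word \<theta> \<omega> x)
      + (dW \<theta> t1 \<omega> x)\<^sup>2 * z (theta_word \<theta> \<omega> x))"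
  have Qz_rec': "Qz \<omega> x = (\<Sum>\<beta>\<in>B. p \<beta> (theta_word \<theta> \<omega> x) * Qz (\<omega> @ [\<beta>]) x)"
    if "set \<omega> \<subseteq> B" "x \<in> H" for \<omega> x
  proof -
    have y: "theta_word \<theta> \<omega> x \<in> H" by (rule theta_word_in[OF maps that])
    show ?thesis unfolding Qz_def
      by (rule Qz_rec[where \<omega>=\<omega> and x=x and \<theta>=\<theta> and y="theta_word \<theta> \<omega> x" and p=p and w=w and s=s and a=a
          and ?t1.0=t1 and ?t2.0=t2 and g=g and z=z and B=B, OF p_sum[OF y] refl wy[OF y] zy[OF y], unfolded Let_def])
  qed
  define K where "K = s * (C2 * S2 + C1 * M0 * (S2 * S1)) + s\<^sup>2 * (C1 * S1)\<^sup>2"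
  define L where "L = - s * ((C2 + C1\<^sup>2) * S2 + C1 * M0 * (S2 * S1))"
  define T where "T = (\<lambda>N. (2 * s * (C1 * S1) * \<epsilon> N + M0 * ?cv N) * (s * C1 * S1) + (\<epsilon> N)\<^sup>2 * Z)"
  have Qz_top: "Qz \<omega> y \<le> K + T N \<and> Qz \<omega> y \<ge> L - T N" if "\<omega> \<in> words B N" "y \<in> H" for \<omega> y N
  proof -
    have s: "set \<omega> \<subseteq> B" and l: "length \<omega> = N" using that by (auto simp: words_def)
    have Ty: "theta_word \<theta> \<omega> y \<in> H" by (rule theta_word_in[OF maps s that(2)])
    let ?A = "AW \<theta> t1 a \<omega> y" and ?d = "dW \<theta> t1 \<omega> y" and ?e = "e2W \<theta> t1 t2 \<omega> y"
      and ?B = "BW \<theta> t1 t2 a g \<omega> y" and ?w = "w (theta_word \<theta> \<omega> y)" and ?z = "z (theta_word \<theta> \<omega> y)"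
    have A: "\<bar>?A\<bar> \<le> C1 * S1"
      using AWb[OF s that(2)] mult_left_mono[OF ps1[of N] C1nn] l by simp
    have A2: "?A\<^sup>2 \<le> (C1 * S1)\<^sup>2" using power_mono[OF A abs_ge_zero, of 2] by simp
    have d: "\<bar>?d\<bar> \<le> \<epsilon> N" using dWb[OF s that(2)] l by simp
    have d2: "?d\<^sup>2 \<le> (\<epsilon> N)\<^sup>2" using power_mono[OF d abs_ge_zero, of 2] by simp
    have e: "\<bar>?e\<bar> \<le> M0 * ?cv N" using e2b[OF s that(2)] l by simp
    have w: "\<bar>?w\<bar> \<le> s * C1 * S1" by (rule wB[OF Ty])
    have z: "\<bar>?z\<bar> \<le> Z" by (rule zb[OF Ty])
    have CMnn: "C1 * M0 \<ge> 0" using C1nn M0nn by simp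
    have Bu: "?B \<le> C2 * S2 + C1 * M0 * (S2 * S1)"
    proof -
      have "?B \<le> C2 * (\<Sum>i<N. (\<epsilon> i)\<^sup>2) + C1 * M0 * (\<Sum>i<N. ?cv i)" using BWu[OF s that(2)] l by simp
      also have "\<dots> \<le> C2 * S2 + C1 * M0 * (S2 * S1)"
        by (intro add_mono mult_left_mono ps2 psc C2nn CMnn)
      finally show ?thesis .
    qed
    have Bl: "?B \<ge> - ((C2 + C1\<^sup>2) * S2 + C1 * M0 * (S2 * S1))"
    proof -
      have "(C2 + C1\<^sup>2) * (\<Sum>i<N. (\<epsilon> i)\<^sup>2) + C1 * M0 * (\<Sum>i<N. ?cv i) \<le> (C2 + C1\<^sup>2) * S2 + C1 * M0 * (S2 * S1)"
        by (intro add_mono mult_left_mono ps2 psc CMnn) (simp add: C2nn)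
      then show ?thesis using BWl[OF s that(2)] l by simp
    qed
    have mid: "\<bar>(2 * s * ?A * ?d + ?e) * ?w\<bar> \<le> (2 * s * (C1 * S1) * \<epsilon> N + M0 * ?cv N) * (s * C1 * S1)"
    proof -
      have "\<bar>2 * s * ?A * ?d + ?e\<bar> \<le> 2 * s * \<bar>?A\<bar> * \<bar>?d\<bar> + \<bar>?e\<bar>"
        using s0 by (simp add: abs_mult abs_triangle_ineq[THEN order_trans])
      also have "\<dots> \<le> 2 * s * (C1 * S1) * \<epsilon> N + M0 * ?cv N"
        using s0 C1nn S1nn by (intro add_mono mult_mono A d e mult_left_mono) auto
      finally have "\<bar>2 * s * ?A * ?d + ?e\<bar> \<le> 2 * s * (C1 * S1) * \<epsilon> N + M0 * ?cv N" .
      then show ?thesis unfolding abs_mult by (intro mult_mono w) auto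
    qed
    have last: "\<bar>?d\<^sup>2 * ?z\<bar> \<le> (\<epsilon> N)\<^sup>2 * Z"
      unfolding abs_mult by (simp only: power2_abs abs_power2) (intro mult_mono d2 z; simp)
    have sB: "s * ?B \<le> s * (C2 * S2 + C1 * M0 * (S2 * S1))" using Bu s0 by (simp add: mult_left_mono)
    have sB2: "s * ?B \<ge> - s * ((C2 + C1\<^sup>2) * S2 + C1 * M0 * (S2 * S1))"
      using mult_left_mono[OF Bl s0] by (simp add: algebra_simps)
    have sA: "s\<^sup>2 * ?A\<^sup>2 \<le> s\<^sup>2 * (C1 * S1)\<^sup>2" using A2 by (simp add: mult_left_mono)
    have sA0: "s\<^sup>2 * ?A\<^sup>2 \<ge> 0" by simp
    have QQ: "Qz \<omega> y = s * ?B + s\<^sup>2 * ?A\<^sup>2 + (2 * s * ?A * ?d + ?e) * ?w + ?d\<^sup>2 * ?z" by (simp add: Qz_def)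
    show ?thesis unfolding QQ K_def L_def T_def using sB sB2 sA sA0 mid last abs_le_iff by (smt (verit))
  qed
  have T0: "T \<longlonglongrightarrow> (2 * s * (C1 * S1) * 0 + M0 * 0) * (s * C1 * S1) + 0\<^sup>2 * Z"
    unfolding T_def by (intro tendsto_intros eps0 cv0)
  have zB: "z y \<le> K \<and> z y \<ge> L" if y: "y \<in> H" for y
  proof -
    have "z y \<le> K + T N \<and> z y \<ge> L - T N" for N
    proof -
      have "Qz [] y \<le> K + T N"
        by (rule iterate_bound[where B=B and \<theta>=\<theta> and H=H and p=p and N=N, OF maps p_nn p_sum Qz_rec' _ y])
           (use Qz_top in auto)
      moreover have "Qz [] y \<ge> L - T N"
        by (rule iterate_bound_ge[where B=B and \<theta>=\<theta> and H=H and p=p and N=N, OF maps p_nn p_sum Qz_rec' _ y])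
           (use Qz_top in auto)
      ultimately show ?thesis by (simp add: Qz_def)
    qed
    moreover have "(\<lambda>N. K + T N) \<longlonglongrightarrow> K + 0" using T0 by (intro tendsto_intros) simp
    moreover have "(\<lambda>N. L - T N) \<longlonglongrightarrow> L - 0" using T0 by (intro tendsto_intros) simp
    ultimately show ?thesis
      using LIMSEQ_le_const[of "\<lambda>N. K + T N" "K + 0" "z y"] LIMSEQ_le_const2[of "\<lambda>N. L - T N" "L - 0" "z y"]
      by auto
  qed
  show "z x \<le> s\<^sup>2 * C1\<^sup>2 * (suminf \<epsilon>)\<^sup>2 + s * (\<Sum>k. (\<epsilon> k)\<^sup>2) * (C2 + C1 * M0 * suminf \<epsilon>)"
    using zB[OF x] unfolding K_def S1_def[symmetric] S2_def[symmetric] by (simp add: algebra_simps power_mult_distrib)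
  show "z x \<ge> - s * (\<Sum>k. (\<epsilon> k)\<^sup>2) * ((C2 + C1\<^sup>2) + C1 * M0 * suminf \<epsilon>)"
    using zB[OF x] unfolding L_def S1_def[symmetric] S2_def[symmetric] by (simp add: algebra_simps)
qed



lemma one_step:
  fixes B :: "'b set" and H :: "real set" and b b1 b2 \<theta> t1 t2 :: "'b \<Rightarrow> real \<Rightarrow> real"
    and v v1 v2 :: "real \<Rightarrow> real" and s lam :: real
  assumes opn: "open H" and Bf: "finite B"
    and maps: "\<forall>\<beta>\<in>B. \<theta> \<beta> ` H \<subseteq> H"
    and bpos: "\<And>\<beta> y. \<beta> \<in> B \<Longrightarrow> y \<in> H \<Longrightarrow> b \<beta> y > 0"
    and db: "\<And>\<beta> y. \<beta> \<in> B \<Longrightarrow> y \<in> H \<Longrightarrow> (b \<beta> has_real_derivative b1 \<beta> y) (at y)"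
    and db1: "\<And>\<beta> y. \<beta> \<in> B \<Longrightarrow> y \<in> H \<Longrightarrow> (b1 \<beta> has_real_derivative b2 \<beta> y) (at y)"
    and dt: "\<And>\<beta> y. \<beta> \<in> B \<Longrightarrow> y \<in> H \<Longrightarrow> (\<theta> \<beta> has_real_derivative t1 \<beta> y) (at y)"
    and dt1: "\<And>\<beta> y. \<beta> \<in> B \<Longrightarrow> y \<in> H \<Longrightarrow> (t1 \<beta> has_real_derivative t2 \<beta> y) (at y)"
    and dv: "\<And>y. y \<in> H \<Longrightarrow> (v has_real_derivative v1 y) (at y)"
    and dv1: "\<And>y. y \<in> H \<Longrightarrow> (v1 has_real_derivative v2 y) (at y)"
    and vpos: "\<And>y. y \<in> H \<Longrightarrow> v y > 0"
    and lam: "lam > 0"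
    and eig: "\<And>y. y \<in> H \<Longrightarrow> (\<Sum>\<beta>\<in>B. b \<beta> y powr s * v (\<theta> \<beta> y)) = lam * v y"
    and x: "x \<in> H"
  defines "p \<equiv> \<lambda>\<beta> y. b \<beta> y powr s * v (\<theta> \<beta> y) / (lam * v y)"
  shows "v1 x / v x = (\<Sum>\<beta>\<in>B. p \<beta> x * (s * (b1 \<beta> x / b \<beta> x) + t1 \<beta> x * (v1 (\<theta> \<beta> x) / v (\<theta> \<beta> x))))"
    and "v2 x / v x = (\<Sum>\<beta>\<in>B. p \<beta> x * (s * (b2 \<beta> x / b \<beta> x - (b1 \<beta> x / b \<beta> x)\<^sup>2) + s\<^sup>2 * (b1 \<beta> x / b \<beta> x)\<^sup>2
       + 2 * s * (b1 \<beta> x / b \<beta> x) * t1 \<beta> x * (v1 (\<theta> \<beta> x) / v (\<theta> \<beta> x))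
       + t2 \<beta> x * (v1 (\<theta> \<beta> x) / v (\<theta> \<beta> x)) + (t1 \<beta> x)\<^sup>2 * (v2 (\<theta> \<beta> x) / v (\<theta> \<beta> x))))"
proof -
  define h where "h = (\<lambda>\<beta> y. b \<beta> y powr s)"
  define a where "a = (\<lambda>\<beta> y. b1 \<beta> y / b \<beta> y)"
  have th: "\<And>\<beta> y. \<beta> \<in> B \<Longrightarrow> y \<in> H \<Longrightarrow> \<theta> \<beta> y \<in> H" using maps by blast
  have dh: "(h \<beta> has_real_derivative s * h \<beta> y * a \<beta> y) (at y)" if "\<beta> \<in> B" "y \<in> H" for \<beta> y
  proof -
    have 1: "((\<lambda>y. b \<beta> y powr s) has_real_derivative s * b \<beta> y powr (s - of_nat 1) * b1 \<beta> y) (at y)"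
      by (rule DERIV_fun_powr[OF db[OF that] bpos[OF that]])
    have 2: "s * b \<beta> y powr (s - of_nat 1) * b1 \<beta> y = s * h \<beta> y * a \<beta> y"
      using bpos[OF that] by (simp add: h_def a_def powr_diff field_simps)
    show ?thesis unfolding h_def by (rule DERIV_cong[OF 1 2[unfolded h_def]])
  qed
  have da: "(a \<beta> has_real_derivative (b2 \<beta> y * b \<beta> y - b1 \<beta> y * b1 \<beta> y) / (b \<beta> y * b \<beta> y)) (at y)"
    if "\<beta> \<in> B" "y \<in> H" for \<beta> y
    unfolding a_def using DERIV_divide[OF db1[OF that] db[OF that]] bpos[OF that] by simp
  have dvt: "((\<lambda>y. v (\<theta> \<beta> y)) has_real_derivative v1 (\<theta> \<beta> y) * t1 \<beta> y) (at y)" if "\<beta> \<in> B" "y \<in> H" for \<beta> y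
    by (rule DERIV_chain2[OF dv[OF th[OF that]] dt[OF that]])
  have dv1t: "((\<lambda>y. v1 (\<theta> \<beta> y)) has_real_derivative v2 (\<theta> \<beta> y) * t1 \<beta> y) (at y)" if "\<beta> \<in> B" "y \<in> H" for \<beta> y
    by (rule DERIV_chain2[OF dv1[OF th[OF that]] dt[OF that]])
  define G where "G = (\<lambda>y. inverse lam * (\<Sum>\<beta>\<in>B. s * (h \<beta> y * a \<beta> y * v (\<theta> \<beta> y)) + h \<beta> y * t1 \<beta> y * v1 (\<theta> \<beta> y)))"
  have vG: "v1 y = G y" if y: "y \<in> H" for y
  proof -
    have "((\<lambda>y. inverse lam * (\<Sum>\<beta>\<in>B. h \<beta> y * v (\<theta> \<beta> y))) has_real_derivative G y) (at y)"
      unfolding G_def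
      apply (rule DERIV_cmult)
      apply (rule DERIV_sum)
      subgoal for \<beta>
        using DERIV_mult[OF dh[of \<beta> y] dvt[of \<beta> y]] y by (simp add: algebra_simps)
      done
    moreover have "\<And>z. z \<in> H \<Longrightarrow> inverse lam * (\<Sum>\<beta>\<in>B. h \<beta> z * v (\<theta> \<beta> z)) = v z"
      using eig lam by (simp add: h_def)
    ultimately have "(v has_real_derivative G y) (at y)"
      by (rule has_field_derivative_transform_within_open[OF _ opn y])
    then show ?thesis using DERIV_unique[OF dv[OF y]] by blast
  qed
  define G' where "G' = inverse lam * (\<Sum>\<beta>\<in>B.
      s * (((s * h \<beta> x * a \<beta> x) * a \<beta> x + ((b2 \<beta> x * b \<beta> x - b1 \<beta> x * b1 \<beta> x) / (b \<beta> x * b \<beta> x)) * h \<beta> x) * v (\<theta> \<beta> x)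
           + (v1 (\<theta> \<beta> x) * t1 \<beta> x) * (h \<beta> x * a \<beta> x))
      + (((s * h \<beta> x * a \<beta> x) * t1 \<beta> x + t2 \<beta> x * h \<beta> x) * v1 (\<theta> \<beta> x) + (v2 (\<theta> \<beta> x) * t1 \<beta> x) * (h \<beta> x * t1 \<beta> x)))"
  have "(G has_real_derivative G') (at x)"
    unfolding G_def G'_def
    apply (rule DERIV_cmult)
    apply (rule DERIV_sum)
    apply (rule DERIV_add)
     apply (rule DERIV_cmult)
     apply (rule DERIV_mult)
      apply (rule DERIV_mult)
       apply (rule dh, assumption, rule x)
      apply (rule da, assumption, rule x)
     apply (rule dvt, assumption, rule x)
    apply (rule DERIV_mult)
     apply (rule DERIV_mult)
      apply (rule dh, assumption, rule x)
     apply (rule dt1, assumption, rule x)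
    apply (rule dv1t, assumption, rule x)
    done
  moreover have "(v1 has_real_derivative v2 x) (at x)" by (rule dv1[OF x])
  ultimately have v2G: "v2 x = G'"
    using DERIV_unique has_field_derivative_transform_within_open[OF _ opn x, of v1 "v2 x" G] vG by blast
  have vx: "v x > 0" by (rule vpos[OF x])
  have vt: "\<And>\<beta>. \<beta> \<in> B \<Longrightarrow> v (\<theta> \<beta> x) > 0" using vpos th x by blast
  have bx: "\<And>\<beta>. \<beta> \<in> B \<Longrightarrow> b \<beta> x > 0" using bpos x by blast
  show "v1 x / v x = (\<Sum>\<beta>\<in>B. p \<beta> x * (s * (b1 \<beta> x / b \<beta> x) + t1 \<beta> x * (v1 (\<theta> \<beta> x) / v (\<theta> \<beta> x))))"
    unfolding vG[OF x] G_def sum_distrib_left sum_divide_distrib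
    apply (rule sum.cong[OF refl])
    subgoal for \<beta> using vx vt[of \<beta>] bx[of \<beta>] lam
      by (simp add: p_def h_def a_def field_simps)
    done
  show "v2 x / v x = (\<Sum>\<beta>\<in>B. p \<beta> x * (s * (b2 \<beta> x / b \<beta> x - (b1 \<beta> x / b \<beta> x)\<^sup>2) + s\<^sup>2 * (b1 \<beta> x / b \<beta> x)\<^sup>2
       + 2 * s * (b1 \<beta> x / b \<beta> x) * t1 \<beta> x * (v1 (\<theta> \<beta> x) / v (\<theta> \<beta> x))
       + t2 \<beta> x * (v1 (\<theta> \<beta> x) / v (\<theta> \<beta> x)) + (t1 \<beta> x)\<^sup>2 * (v2 (\<theta> \<beta> x) / v (\<theta> \<beta> x))))"
    unfolding v2G G'_def sum_distrib_left sum_divide_distrib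
    apply (rule sum.cong[OF refl])
    subgoal for \<beta> using vx vt[of \<beta>] bx[of \<beta>] lam
      by (simp add: p_def h_def a_def field_simps power2_eq_square)
    done
qed



lemma H_basic:
  fixes c d :: "nat \<Rightarrow> real"
  assumes n_pos: "n \<ge> 1" and cd: "\<forall>j<n. c j < d j" and H_def: "H = (\<Union>j<n. {c j<..<d j})"
  shows "open H" "bounded H" "compact (closure H)" "\<exists>x y. x \<in> H \<and> y \<in> H \<and> x \<noteq> y" "H \<subseteq> closure H"
proof -
  show "open H" unfolding H_def by auto
  show bH: "bounded H" unfolding H_def by (intro bounded_UN) auto
  then show "compact (closure H)" by simp
  have "c 0 < d 0" using cd n_pos by auto
  moreover have "{c 0<..<d 0} \<subseteq> H" using n_pos unfolding H_def by (intro UN_upper) auto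
  ultimately show "\<exists>x y. x \<in> H \<and> y \<in> H \<and> x \<noteq> y"
    by (intro exI[of _ "(2*c 0 + d 0)/3"] exI[of _ "(c 0 + 2 * d 0)/3"]) auto
  show "H \<subseteq> closure H" by (rule closure_subset)
qed

lemma cont_bounded:
  fixes f :: "real \<Rightarrow> real"
  assumes "compact K" "continuous_on K f"
  shows "\<exists>M. \<forall>x\<in>K. \<bar>f x\<bar> \<le> M"
proof -
  have "bounded (f ` K)" using compact_continuous_image[OF assms(2,1)] by (rule compact_imp_bounded)
  then obtain M where "\<forall>y\<in>f ` K. norm y \<le> M" by (auto simp: bounded_iff)
  then show ?thesis by auto
qed

lemma lip_on_H:
  fixes c d :: "nat \<Rightarrow> real" and f f' :: "real \<Rightarrow> real"
  assumes cd: "\<forall>j<n. c j < d j"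
    and disj: "\<forall>i<n. \<forall>j<n. i \<noteq> j \<longrightarrow> {c i..d i} \<inter> {c j..d j} = {}"
    and H_def: "H = (\<Union>j<n. {c j<..<d j})"
    and fb: "\<And>x. x \<in> H \<Longrightarrow> \<bar>f x\<bar> \<le> M"
    and f'b: "\<And>x. x \<in> H \<Longrightarrow> \<bar>f' x\<bar> \<le> K"
    and df: "\<And>x. x \<in> H \<Longrightarrow> (f has_real_derivative f' x) (at x)"
  shows "\<exists>L. \<forall>x\<in>H. \<forall>y\<in>H. \<bar>f x - f y\<bar> \<le> L * \<bar>x - y\<bar>"
proof -
  define g where "g = (\<lambda>i j. if d i < c j then c j - d i else c i - d j)"
  define P where "P = {(i, j). i < n \<and> j < n \<and> i \<noteq> j}"
  have Pf: "finite P" unfolding P_def by (rule finite_subset[of _ "{..<n} \<times> {..<n}"]) auto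
  define \<delta> where "\<delta> = Min ((\<lambda>(i,j). g i j) ` P)"
  have sep: "d i < c j \<or> d j < c i" if "i < n" "j < n" "i \<noteq> j" for i j
  proof (rule ccontr)
    assume "\<not> (d i < c j \<or> d j < c i)"
    then have "max (c i) (c j) \<in> {c i..d i} \<inter> {c j..d j}" using cd that by auto
    then show False using disj that by auto
  qed
  have gpos: "g i j > 0" if "i < n" "j < n" "i \<noteq> j" for i j
    using sep[OF that] unfolding g_def by auto
  have \<delta>le: "\<delta> \<le> g i j" if "(i, j) \<in> P" for i j
    unfolding \<delta>_def using Pf that by (intro Min_le) auto
  have \<delta>pos: "\<delta> > 0" if "P \<noteq> {}"
  proof -
    have "\<delta> \<in> (\<lambda>(i,j). g i j) ` P" unfolding \<delta>_def using Pf that by (intro Min_in) auto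
    then show ?thesis using gpos unfolding P_def by auto
  qed
  define L where "L = \<bar>K\<bar> + \<bar>2 * M / \<delta>\<bar>"
  have "\<bar>f x - f y\<bar> \<le> L * \<bar>x - y\<bar>" if x: "x \<in> H" and y: "y \<in> H" for x y
  proof -
    obtain i where i: "i < n" "x \<in> {c i<..<d i}" using x H_def by auto
    obtain j where j: "j < n" "y \<in> {c j<..<d j}" using y H_def by auto
    show ?thesis
    proof (cases "i = j")
      case True
      let ?S = "{c i<..<d i}"
      have sub: "?S \<subseteq> H" using i H_def by auto
      have "norm (f x - f y) \<le> K * norm (x - y)"
      proof (rule field_differentiable_bound[of ?S f f' K])
        show "convex ?S" by simp
        show "\<And>z. z \<in> ?S \<Longrightarrow> (f has_field_derivative f' z) (at z within ?S)"
          using df sub by (meson has_field_derivative_at_within subsetD)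
        show "\<And>z. z \<in> ?S \<Longrightarrow> norm (f' z) \<le> K" using f'b sub by auto
        show "x \<in> ?S" using i by simp
        show "y \<in> ?S" using j True by simp
      qed
      then have "\<bar>f x - f y\<bar> \<le> K * \<bar>x - y\<bar>" by simp
      also have "\<dots> \<le> L * \<bar>x - y\<bar>" unfolding L_def
        by (intro mult_right_mono) (auto intro: order_trans[OF abs_ge_self] add_increasing2)
      finally show ?thesis .
    next
      case False
      have ij: "(i, j) \<in> P" using i j False unfolding P_def by auto
      then have dp: "\<delta> > 0" using \<delta>pos by auto
      have "g i j \<le> \<bar>x - y\<bar>" using sep[OF i(1) j(1) False] i j unfolding g_def by auto
      then have xy: "\<delta> \<le> \<bar>x - y\<bar>" using \<delta>le[OF ij] by linarith
      have M0: "M \<ge> 0" using fb[OF x] by linarith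
      have "\<bar>f x - f y\<bar> \<le> 2 * M" using fb[OF x] fb[OF y] by linarith
      also have "\<dots> = (2 * M / \<delta>) * \<delta>" using dp by simp
      also have "\<dots> \<le> (2 * M / \<delta>) * \<bar>x - y\<bar>" using xy dp M0 by (intro mult_left_mono) auto
      also have "\<dots> \<le> L * \<bar>x - y\<bar>" unfolding L_def
      proof (intro mult_right_mono)
        have "2 * M / \<delta> \<le> \<bar>2 * M / \<delta>\<bar>" by (rule abs_ge_self)
        then show "2 * M / \<delta> \<le> \<bar>K\<bar> + \<bar>2 * M / \<delta>\<bar>" by linarith
      qed simp
      finally show ?thesis .
    qed
  qed
  then show ?thesis by blast
qed



context
  fixes B :: "'b set" and H :: "real set" and \<theta> :: "'b \<Rightarrow> real \<Rightarrow> real"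
  assumes Bf: "finite B" and Bne: "B \<noteq> {}"
    and two: "\<exists>x y. x \<in> H \<and> y \<in> H \<and> x \<noteq> y"
    and maps: "\<forall>\<beta>\<in>B. \<theta> \<beta> ` H \<subseteq> H"
    and lip: "\<forall>\<beta>\<in>B. \<exists>L. \<forall>x\<in>H. \<forall>y\<in>H. \<bar>\<theta> \<beta> x - \<theta> \<beta> y\<bar> \<le> L * \<bar>x - y\<bar>"
begin

definition qset :: "nat \<Rightarrow> real set" where
  "qset \<nu> = {\<bar>theta_word \<theta> \<omega> x - theta_word \<theta> \<omega> y\<bar> / \<bar>x - y\<bar> | \<omega> x y.
            \<omega> \<in> words B \<nu> \<and> x \<in> H \<and> y \<in> H \<and> x \<noteq> y}"

lemma eps_qset: "\<nu> \<noteq> 0 \<Longrightarrow> eps_seq B \<theta> H \<nu> = Sup (qset \<nu>)"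
  by (simp add: eps_seq_def qset_def)

lemma word_lip: "\<exists>L. \<forall>\<omega>\<in>words B \<nu>. \<forall>x\<in>H. \<forall>y\<in>H. \<bar>theta_word \<theta> \<omega> x - theta_word \<theta> \<omega> y\<bar> \<le> L * \<bar>x - y\<bar>"
proof -
  obtain Lf where Lf: "\<forall>\<beta>\<in>B. \<forall>x\<in>H. \<forall>y\<in>H. \<bar>\<theta> \<beta> x - \<theta> \<beta> y\<bar> \<le> Lf \<beta> * \<bar>x - y\<bar>"
    using lip by metis
  define Lm where "Lm = (\<Sum>\<beta>\<in>B. \<bar>Lf \<beta>\<bar>)"
  have Lm: "\<bar>\<theta> \<beta> x - \<theta> \<beta> y\<bar> \<le> Lm * \<bar>x - y\<bar>" if "\<beta> \<in> B" "x \<in> H" "y \<in> H" for \<beta> x y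
  proof -
    have "\<bar>Lf \<beta>\<bar> \<le> Lm" unfolding Lm_def using member_le_sum[of \<beta> B "\<lambda>\<beta>. \<bar>Lf \<beta>\<bar>"] Bf that(1) by auto
    then have "Lf \<beta> * \<bar>x - y\<bar> \<le> Lm * \<bar>x - y\<bar>" by (intro mult_right_mono) auto
    then show ?thesis using Lf that by fastforce
  qed
  have Lm0: "Lm \<ge> 0" unfolding Lm_def by (simp add: sum_nonneg)
  have "\<forall>\<omega>. length \<omega> = \<nu> \<longrightarrow> set \<omega> \<subseteq> B \<longrightarrow> (\<forall>x\<in>H. \<forall>y\<in>H. \<bar>theta_word \<theta> \<omega> x - theta_word \<theta> \<omega> y\<bar> \<le> Lm ^ \<nu> * \<bar>x - y\<bar>)"
  proof (induction \<nu>)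
    case 0 then show ?case by simp
  next
    case (Suc \<nu>)
    show ?case
    proof (intro allI impI ballI)
      fix \<omega> x y assume l: "length \<omega> = Suc \<nu>" and s: "set \<omega> \<subseteq> B" and x: "x \<in> H" and y: "y \<in> H"
      obtain j \<omega>' where \<omega>: "\<omega> = j # \<omega>'" using l by (cases \<omega>) auto
      have j: "j \<in> B" and s': "set \<omega>' \<subseteq> B" and l': "length \<omega>' = \<nu>" using s l \<omega> by auto
      have tx: "\<theta> j x \<in> H" "\<theta> j y \<in> H" using maps j x y by auto
      have "\<bar>theta_word \<theta> \<omega> x - theta_word \<theta> \<omega> y\<bar> = \<bar>theta_word \<theta> \<omega>' (\<theta> j x) - theta_word \<theta> \<omega>' (\<theta> j y)\<bar>"
        using \<omega> by simp
      also have "\<dots> \<le> Lm ^ \<nu> * \<bar>\<theta> j x - \<theta> j y\<bar>" using Suc.IH l' s' tx by blast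
      also have "\<dots> \<le> Lm ^ \<nu> * (Lm * \<bar>x - y\<bar>)" using Lm[OF j x y] Lm0 by (intro mult_left_mono) auto
      finally show "\<bar>theta_word \<theta> \<omega> x - theta_word \<theta> \<omega> y\<bar> \<le> Lm ^ Suc \<nu> * \<bar>x - y\<bar>" by (simp add: algebra_simps)
    qed
  qed
  then show ?thesis unfolding words_def by blast
qed

lemma qset_bdd: "bdd_above (qset \<nu>)"
proof -
  obtain L where L: "\<forall>\<omega>\<in>words B \<nu>. \<forall>x\<in>H. \<forall>y\<in>H. \<bar>theta_word \<theta> \<omega> x - theta_word \<theta> \<omega> y\<bar> \<le> L * \<bar>x - y\<bar>"
    using word_lip by blast
  show ?thesis unfolding qset_def bdd_above_def
  proof (intro exI[of _ L] ballI)
    fix q assume "q \<in> {\<bar>theta_word \<theta> \<omega> x - theta_word \<theta> \<omega> y\<bar> / \<bar>x - y\<bar> | \<omega> x y.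
            \<omega> \<in> words B \<nu> \<and> x \<in> H \<and> y \<in> H \<and> x \<noteq> y}"
    then obtain \<omega> x y where q: "q = \<bar>theta_word \<theta> \<omega> x - theta_word \<theta> \<omega> y\<bar> / \<bar>x - y\<bar>"
      and h: "\<omega> \<in> words B \<nu>" "x \<in> H" "y \<in> H" "x \<noteq> y" by blast
    have "\<bar>theta_word \<theta> \<omega> x - theta_word \<theta> \<omega> y\<bar> \<le> L * \<bar>x - y\<bar>" using L h by blast
    then show "q \<le> L" using h(4) unfolding q by (simp add: divide_le_eq)
  qed
qed

lemma qset_ne: "qset \<nu> \<noteq> {}"
proof -
  obtain \<beta> where \<beta>: "\<beta> \<in> B" using Bne by blast
  obtain x y where "x \<in> H" "y \<in> H" "x \<noteq> y" using two by blast
  moreover have "replicate \<nu> \<beta> \<in> words B \<nu>" using \<beta> by (auto simp: words_def)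
  ultimately show ?thesis unfolding qset_def by blast
qed

lemma quot_le:
  assumes "\<omega> \<in> words B \<nu>" "x \<in> H" "y \<in> H" "x \<noteq> y"
  shows "\<bar>theta_word \<theta> \<omega> x - theta_word \<theta> \<omega> y\<bar> / \<bar>x - y\<bar> \<le> eps_seq B \<theta> H \<nu>"
proof (cases "\<nu> = 0")
  case True
  then have "\<omega> = []" using assms(1) by (simp add: words_def)
  then show ?thesis using True assms(4) by (simp add: eps_seq_def)
next
  case False
  have "\<bar>theta_word \<theta> \<omega> x - theta_word \<theta> \<omega> y\<bar> / \<bar>x - y\<bar> \<in> qset \<nu>"
    unfolding qset_def using assms by blast
  then show ?thesis using eps_qset[OF False] cSup_upper[OF _ qset_bdd] by simp
qed

lemma eps_nn: "eps_seq B \<theta> H \<nu> \<ge> 0"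
proof (cases "\<nu> = 0")
  case True then show ?thesis by (simp add: eps_seq_def)
next
  case False
  obtain q where "q \<in> qset \<nu>" using qset_ne by blast
  moreover have "q \<ge> 0" using \<open>q \<in> qset \<nu>\<close> unfolding qset_def by auto
  ultimately show ?thesis using eps_qset[OF False] cSup_upper[OF _ qset_bdd] by fastforce
qed

lemma eps_mult: "eps_seq B \<theta> H (a + b) \<le> eps_seq B \<theta> H a * eps_seq B \<theta> H b"
proof (cases "a = 0 \<or> b = 0")
  case True then show ?thesis by (auto simp: eps_seq_def)
next
  case False
  then have ne: "a + b \<noteq> 0" by simp
  show ?thesis unfolding eps_qset[OF ne]
  proof (rule cSup_least[OF qset_ne])
    fix q assume "q \<in> qset (a + b)"
    then obtain \<omega> x y where q: "q = \<bar>theta_word \<theta> \<omega> x - theta_word \<theta> \<omega> y\<bar> / \<bar>x - y\<bar>"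
      and h: "\<omega> \<in> words B (a + b)" "x \<in> H" "y \<in> H" "x \<noteq> y" unfolding qset_def by blast
    define u where "u = take a \<omega>"
    define v where "v = drop a \<omega>"
    have uw: "u \<in> words B a" "v \<in> words B b" using h(1) set_take_subset[of a \<omega>] set_drop_subset[of a \<omega>]
      by (auto simp: words_def u_def v_def)
    have split: "theta_word \<theta> \<omega> = theta_word \<theta> v \<circ> theta_word \<theta> u"
      using theta_word_append[of \<theta> u v] by (simp add: u_def v_def)
    let ?X = "theta_word \<theta> u x" and ?Y = "theta_word \<theta> u y"
    have XY: "?X \<in> H" "?Y \<in> H" using theta_word_in[OF maps _ h(2)] theta_word_in[OF maps _ h(3)] uw
      by (auto simp: words_def)
    have ea: "eps_seq B \<theta> H a \<ge> 0" and eb: "eps_seq B \<theta> H b \<ge> 0" by (rule eps_nn)+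
    show "q \<le> eps_seq B \<theta> H a * eps_seq B \<theta> H b"
    proof (cases "?X = ?Y")
      case True
      then show ?thesis unfolding q split using ea eb by simp
    next
      case F: False
      have q1: "\<bar>?X - ?Y\<bar> / \<bar>x - y\<bar> \<le> eps_seq B \<theta> H a" by (rule quot_le[OF uw(1) h(2-4)])
      have q2: "\<bar>theta_word \<theta> v ?X - theta_word \<theta> v ?Y\<bar> / \<bar>?X - ?Y\<bar> \<le> eps_seq B \<theta> H b"
        by (rule quot_le[OF uw(2) XY F])
      have "q = (\<bar>theta_word \<theta> v ?X - theta_word \<theta> v ?Y\<bar> / \<bar>?X - ?Y\<bar>) * (\<bar>?X - ?Y\<bar> / \<bar>x - y\<bar>)"
        unfolding q split using F by simp
      also have "\<dots> \<le> eps_seq B \<theta> H b * eps_seq B \<theta> H a"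
        by (intro mult_mono q1 q2 eb) auto
      finally show ?thesis by (simp add: mult.commute)
    qed
  qed
qed

lemma eps_contr:
  assumes mu: "\<mu> \<ge> 1" and cl: "H \<subseteq> C"
    and c: "\<forall>\<omega>\<in>words B \<mu>. \<forall>x\<in>C. \<forall>y\<in>C. \<bar>theta_word \<theta> \<omega> x - theta_word \<theta> \<omega> y\<bar> \<le> \<kappa> * \<bar>x - y\<bar>"
  shows "eps_seq B \<theta> H \<mu> \<le> \<kappa>"
proof -
  have ne: "\<mu> \<noteq> 0" using mu by simp
  show ?thesis unfolding eps_qset[OF ne]
  proof (rule cSup_least[OF qset_ne])
    fix q assume "q \<in> qset \<mu>"
    then obtain \<omega> x y where q: "q = \<bar>theta_word \<theta> \<omega> x - theta_word \<theta> \<omega> y\<bar> / \<bar>x - y\<bar>"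
      and h: "\<omega> \<in> words B \<mu>" "x \<in> H" "y \<in> H" "x \<noteq> y" unfolding qset_def by blast
    have "\<bar>theta_word \<theta> \<omega> x - theta_word \<theta> \<omega> y\<bar> \<le> \<kappa> * \<bar>x - y\<bar>" using c h cl by blast
    then show "q \<le> \<kappa>" unfolding q using h(4) by (simp add: divide_le_eq)
  qed
qed

end


lemma submult_summable:
  fixes e :: "nat \<Rightarrow> real"
  assumes nn: "\<And>k. e k \<ge> 0" and sm: "\<And>a b. e (a + b) \<le> e a * e b"
    and mu: "\<mu> \<ge> 1" and c: "e \<mu> \<le> \<kappa>" and k1: "\<kappa> < 1"
  shows "summable e" "summable (\<lambda>k. (e k)\<^sup>2)"
proof -
  define r where "r = e \<mu>"
  have r0: "r \<ge> 0" and r1: "r < 1" using nn c k1 by (auto simp: r_def)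
  define Cm where "Cm = (\<Sum>i<\<mu>. e i)"
  have Cm: "e i \<le> Cm" if "i < \<mu>" for i
    unfolding Cm_def using that nn by (intro member_le_sum) auto
  have pw: "e (q * \<mu> + i) \<le> r ^ q * e i" for q i
  proof (induction q)
    case 0 then show ?case by simp
  next
    case (Suc q)
    have "e (Suc q * \<mu> + i) = e (\<mu> + (q * \<mu> + i))" by (simp add: algebra_simps)
    also have "\<dots> \<le> r * e (q * \<mu> + i)" unfolding r_def by (rule sm)
    also have "\<dots> \<le> r * (r ^ q * e i)" using Suc r0 by (intro mult_left_mono)
    finally show ?case by (simp add: algebra_simps)
  qed
  have ek: "e k \<le> Cm * r ^ (k div \<mu>)" for k
  proof -
    have "e k = e ((k div \<mu>) * \<mu> + k mod \<mu>)" by simp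
    also have "\<dots> \<le> r ^ (k div \<mu>) * e (k mod \<mu>)" by (rule pw)
    also have "\<dots> \<le> r ^ (k div \<mu>) * Cm" using Cm[of "k mod \<mu>"] mu r0 by (intro mult_left_mono) auto
    finally show ?thesis by (simp add: mult.commute)
  qed
  have Cm0: "Cm \<ge> 0" unfolding Cm_def using nn by (simp add: sum_nonneg)
  define r' where "r' = max r (1/2)"
  have r'0: "r' > 0" and r'1: "r' < 1" using r1 by (auto simp: r'_def)
  define \<rho> where "\<rho> = root \<mu> r'"
  have \<rho>0: "\<rho> > 0" using r'0 mu by (simp add: \<rho>_def)
  have \<rho>1: "\<rho> < 1" using r'1 r'0 mu by (simp add: \<rho>_def real_root_lt_1_iff)
  have \<rho>\<mu>: "\<rho> ^ \<mu> = r'" using r'0 mu by (simp add: \<rho>_def)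
  have gk: "e k \<le> (Cm / \<rho> ^ \<mu>) * \<rho> ^ k" for k
  proof -
    have "r ^ (k div \<mu>) \<le> r' ^ (k div \<mu>)" using r0 by (intro power_mono) (auto simp: r'_def)
    also have "\<dots> = \<rho> ^ (\<mu> * (k div \<mu>))" by (simp add: power_mult \<rho>\<mu>)
    also have "\<dots> = \<rho> ^ (\<mu> * (k div \<mu>) + \<mu>) / \<rho> ^ \<mu>" using \<rho>0 by (simp add: power_add)
    also have "\<dots> \<le> \<rho> ^ k / \<rho> ^ \<mu>"
    proof -
      have "k \<le> \<mu> * (k div \<mu>) + \<mu>"
        using mu by (metis add_le_cancel_left div_mult_mod_eq mod_less_divisor mult.commute
              nat_less_le not_one_le_zero order_less_imp_le add_le_mono1 gr0I)
      then have "\<rho> ^ (\<mu> * (k div \<mu>) + \<mu>) \<le> \<rho> ^ k" using \<rho>0 \<rho>1 by (intro power_decreasing) auto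
      then show ?thesis using \<rho>0 by (simp add: divide_right_mono)
    qed
    finally have "r ^ (k div \<mu>) \<le> \<rho> ^ k / \<rho> ^ \<mu>" .
    then have "Cm * r ^ (k div \<mu>) \<le> Cm * (\<rho> ^ k / \<rho> ^ \<mu>)" using Cm0 by (intro mult_left_mono)
    then show ?thesis using ek[of k] by simp
  qed
  have sg: "summable (\<lambda>k. (Cm / \<rho> ^ \<mu>) * \<rho> ^ k)"
    using \<rho>0 \<rho>1 by (intro summable_mult summable_geometric) auto
  show s1: "summable e"
    by (rule summable_comparison_test[OF _ sg]) (use gk nn in auto)
  have eb: "e k \<le> Cm" for k
  proof -
    have "r ^ (k div \<mu>) \<le> 1" using r0 r1 by (simp add: power_le_one)
    then show ?thesis using ek[of k] Cm0 by (meson mult_left_le order_trans)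
  qed
  show "summable (\<lambda>k. (e k)\<^sup>2)"
  proof (rule summable_comparison_test[OF _ summable_mult[OF s1, of Cm]])
    show "\<exists>N. \<forall>n\<ge>N. norm ((e n)\<^sup>2) \<le> Cm * e n"
      using eb nn by (auto simp: power2_eq_square intro!: mult_right_mono)
  qed
qed


theorem theorem6p4:
  fixes n m :: nat and c d :: "nat \<Rightarrow> real" and H :: "real set"
    and B :: "'b set" and b \<theta> :: "'b \<Rightarrow> real \<Rightarrow> real"
    and Db D\<theta> :: "'b \<Rightarrow> nat \<Rightarrow> real \<Rightarrow> real"
    and s lam :: real and v :: "real \<Rightarrow> real" and Dv :: "nat \<Rightarrow> real \<Rightarrow> real"
  assumes n_pos: "n \<ge> 1"
    and cd: "\<forall>j<n. c j < d j"
    and disj: "\<forall>i<n. \<forall>j<n. i \<noteq> j \<longrightarrow> {c i..d i} \<inter> {c j..d j} = {}"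
    and H_def: "H = (\<Union>j<n. {c j<..<d j})"
    and B_fin: "finite B" and B_ne: "B \<noteq> {}"
    and m2: "m \<ge> 2"
    and b_Cm: "\<forall>\<beta>\<in>B. Cm_closure m H (b \<beta>) (Db \<beta>)"
    and \<theta>_Cm: "\<forall>\<beta>\<in>B. Cm_closure m H (\<theta> \<beta>) (D\<theta> \<beta>)"
    and b_pos: "\<forall>\<beta>\<in>B. \<forall>x\<in>closure H. b \<beta> x > 0"
    and \<theta>_maps: "\<forall>\<beta>\<in>B. \<theta> \<beta> ` H \<subseteq> H"
    and contr: "\<exists>\<mu>::nat. \<exists>\<kappa>::real. \<mu> \<ge> 1 \<and> \<kappa> < 1 \<and>
        (\<forall>\<omega>\<in>words B \<mu>. \<forall>x\<in>closure H. \<forall>y\<in>closure H.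
           \<bar>theta_word \<theta> \<omega> x - theta_word \<theta> \<omega> y\<bar> \<le> \<kappa> * \<bar>x - y\<bar>)"
    and s_pos: "s > 0"
    and v_Cm: "Cm_closure m H v Dv"
    and v_pos: "\<forall>x\<in>closure H. v x > 0"
    and v_eig: "\<forall>x\<in>closure H. (\<Sum>\<beta>\<in>B. b \<beta> x powr s * v (\<theta> \<beta> x)) = lam * v x"
  defines "C1 \<equiv> Sup {\<bar>Db \<beta> 1 x\<bar> / b \<beta> x | \<beta> x. \<beta> \<in> B \<and> x \<in> H}"
    and "C2 \<equiv> Sup {\<bar>Db \<beta> 2 x\<bar> / b \<beta> x | \<beta> x. \<beta> \<in> B \<and> x \<in> H}"
    and "M0 \<equiv> Sup {\<bar>D\<theta> \<beta> 2 x\<bar> | \<beta> x. \<beta> \<in> B \<and> x \<in> closure H}"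
    and "S1 \<equiv> (\<Sum>k. eps_seq B \<theta> H k)"
    and "S2 \<equiv> (\<Sum>k. (eps_seq B \<theta> H k)\<^sup>2)"
  shows "\<forall>x\<in>closure H.
           Dv 2 x / v x \<le> s\<^sup>2 * C1\<^sup>2 * S1\<^sup>2 + s * S2 * (C2 + C1 * M0 * S1)
         \<and> Dv 2 x / v x \<ge> - s * S2 * ((C2 + C1\<^sup>2) + C1 * M0 * S1)"
proof -
  note Hb = H_basic[OF n_pos cd H_def]
  have opn: "open H" and cpt: "compact (closure H)" and two: "\<exists>x y. x \<in> H \<and> y \<in> H \<and> x \<noteq> y"
    and Hc: "H \<subseteq> closure H" using Hb by auto
  obtain x0 where x0: "x0 \<in> H" using two by blast
  obtain \<beta>0 where \<beta>0: "\<beta>0 \<in> B" using B_ne by blast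
  have Cm_facts: "(\<forall>x\<in>closure H. Df 0 x = f x) \<and> continuous_on (closure H) (Df 0) \<and> continuous_on (closure H) (Df 1)
      \<and> continuous_on (closure H) (Df 2) \<and> (\<forall>y\<in>H. (f has_real_derivative Df 1 y) (at y))
      \<and> (\<forall>y\<in>H. (Df 1 has_real_derivative Df 2 y) (at y))"
    if "Cm_closure m H f Df" for f Df
  proof -
    have e: "\<forall>x\<in>closure H. Df 0 x = f x" and c: "\<forall>k\<le>m. continuous_on (closure H) (Df k)"
      and d: "\<forall>k<m. \<forall>x\<in>H. (Df k has_real_derivative Df (Suc k) x) (at x)"
      using that by (auto simp: Cm_closure_def)
    have "(f has_real_derivative Df 1 y) (at y)" if y: "y \<in> H" for y
    proof -
      have "(Df 0 has_real_derivative Df 1 y) (at y)" using d m2 y by auto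
      then show ?thesis
        by (rule has_field_derivative_transform_within_open[OF _ opn y]) (use e Hc in auto)
    qed
    moreover have "\<forall>y\<in>H. (Df 1 has_real_derivative Df 2 y) (at y)" using d m2 by (auto simp: numeral_2_eq_2)
    ultimately show ?thesis using e c m2 by auto
  qed
  have bF: "\<And>\<beta>. \<beta> \<in> B \<Longrightarrow> (\<forall>x\<in>closure H. Db \<beta> 0 x = b \<beta> x) \<and> continuous_on (closure H) (Db \<beta> 0) \<and> continuous_on (closure H) (Db \<beta> 1)
      \<and> continuous_on (closure H) (Db \<beta> 2) \<and> (\<forall>y\<in>H. (b \<beta> has_real_derivative Db \<beta> 1 y) (at y))
      \<and> (\<forall>y\<in>H. (Db \<beta> 1 has_real_derivative Db \<beta> 2 y) (at y))"
    using Cm_facts b_Cm by blast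
  have tF: "\<And>\<beta>. \<beta> \<in> B \<Longrightarrow> (\<forall>x\<in>closure H. D\<theta> \<beta> 0 x = \<theta> \<beta> x) \<and> continuous_on (closure H) (D\<theta> \<beta> 0) \<and> continuous_on (closure H) (D\<theta> \<beta> 1)
      \<and> continuous_on (closure H) (D\<theta> \<beta> 2) \<and> (\<forall>y\<in>H. (\<theta> \<beta> has_real_derivative D\<theta> \<beta> 1 y) (at y))
      \<and> (\<forall>y\<in>H. (D\<theta> \<beta> 1 has_real_derivative D\<theta> \<beta> 2 y) (at y))"
    using Cm_facts \<theta>_Cm by blast
  have vF: "(\<forall>x\<in>closure H. Dv 0 x = v x) \<and> continuous_on (closure H) (Dv 0) \<and> continuous_on (closure H) (Dv 1)
      \<and> continuous_on (closure H) (Dv 2) \<and> (\<forall>y\<in>H. (v has_real_derivative Dv 1 y) (at y))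
      \<and> (\<forall>y\<in>H. (Dv 1 has_real_derivative Dv 2 y) (at y))"
    using Cm_facts v_Cm by blast
  have lip: "\<forall>\<beta>\<in>B. \<exists>L. \<forall>x\<in>H. \<forall>y\<in>H. \<bar>\<theta> \<beta> x - \<theta> \<beta> y\<bar> \<le> L * \<bar>x - y\<bar>"
  proof
    fix \<beta> assume \<beta>: "\<beta> \<in> B"
    obtain M where M: "\<forall>x\<in>closure H. \<bar>D\<theta> \<beta> 0 x\<bar> \<le> M" using cont_bounded[OF cpt] tF[OF \<beta>] by blast
    obtain K where K: "\<forall>x\<in>closure H. \<bar>D\<theta> \<beta> 1 x\<bar> \<le> K" using cont_bounded[OF cpt] tF[OF \<beta>] by blast
    show "\<exists>L. \<forall>x\<in>H. \<forall>y\<in>H. \<bar>\<theta> \<beta> x - \<theta> \<beta> y\<bar> \<le> L * \<bar>x - y\<bar>"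
    proof (rule lip_on_H[OF cd disj H_def])
      show "\<And>x. x \<in> H \<Longrightarrow> \<bar>\<theta> \<beta> x\<bar> \<le> M" using M tF[OF \<beta>] Hc by fastforce
      show "\<And>x. x \<in> H \<Longrightarrow> \<bar>D\<theta> \<beta> 1 x\<bar> \<le> K" using K Hc by blast
      show "\<And>x. x \<in> H \<Longrightarrow> (\<theta> \<beta> has_real_derivative D\<theta> \<beta> 1 x) (at x)" using tF[OF \<beta>] by blast
    qed
  qed
  define \<epsilon> where "\<epsilon> = eps_seq B \<theta> H"
  have eps_nn': "\<And>k. \<epsilon> k \<ge> 0" unfolding \<epsilon>_def by (rule eps_nn[OF B_fin B_ne two \<theta>_maps lip])
  have eps_mult': "\<And>a b. \<epsilon> (a + b) \<le> \<epsilon> a * \<epsilon> b" unfolding \<epsilon>_def by (rule eps_mult[OF B_fin B_ne two \<theta>_maps lip])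
  obtain \<mu> :: nat and \<kappa> :: real where mu: "\<mu> \<ge> 1" and k1: "\<kappa> < 1"
    and c: "\<forall>\<omega>\<in>words B \<mu>. \<forall>x\<in>closure H. \<forall>y\<in>closure H. \<bar>theta_word \<theta> \<omega> x - theta_word \<theta> \<omega> y\<bar> \<le> \<kappa> * \<bar>x - y\<bar>"
    using contr by blast
  have emu: "\<epsilon> \<mu> \<le> \<kappa>" unfolding \<epsilon>_def by (rule eps_contr[OF B_fin B_ne two \<theta>_maps lip mu Hc c])
  have sum1: "summable \<epsilon>" and sum2: "summable (\<lambda>k. (\<epsilon> k)\<^sup>2)"
    using submult_summable[OF eps_nn' eps_mult' mu emu k1] by auto
  have dWb: "\<bar>dW \<theta> (\<lambda>\<beta>. D\<theta> \<beta> 1) \<omega> x\<bar> \<le> \<epsilon> (length \<omega>)" if "set \<omega> \<subseteq> B" "x \<in> H" for \<omega> x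
    unfolding \<epsilon>_def
  proof (rule dW_le_eps[OF opn \<theta>_maps _ _ that])
    show "\<And>\<beta> y. \<beta> \<in> B \<Longrightarrow> y \<in> H \<Longrightarrow> (\<theta> \<beta> has_real_derivative D\<theta> \<beta> 1 y) (at y)" using tF by blast
    show "bdd_above {\<bar>theta_word \<theta> \<omega>' x - theta_word \<theta> \<omega>' y\<bar> / \<bar>x - y\<bar> | \<omega>' x y.
            \<omega>' \<in> words B (length \<omega>) \<and> x \<in> H \<and> y \<in> H \<and> x \<noteq> y}"
      using qset_bdd[OF B_fin B_ne two \<theta>_maps lip, of "length \<omega>"] qset_def[OF B_fin B_ne two \<theta>_maps lip, of "length \<omega>"] by simp
  qed
  have bddB: "bdd_above {f \<beta> x | \<beta> x. \<beta> \<in> B \<and> x \<in> S}"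
    if hb: "\<forall>\<beta>\<in>B. \<exists>M. \<forall>x\<in>S. f \<beta> x \<le> M" for f :: "'b \<Rightarrow> real \<Rightarrow> real" and S
  proof -
    obtain Mf where Mf: "\<forall>\<beta>\<in>B. \<forall>x\<in>S. f \<beta> x \<le> Mf \<beta>" using hb by metis
    have "f \<beta> x \<le> (\<Sum>\<beta>\<in>B. \<bar>Mf \<beta>\<bar>)" if "\<beta> \<in> B" "x \<in> S" for \<beta> x
    proof -
      have "\<bar>Mf \<beta>\<bar> \<le> (\<Sum>\<beta>\<in>B. \<bar>Mf \<beta>\<bar>)" using member_le_sum[of \<beta> B "\<lambda>\<beta>. \<bar>Mf \<beta>\<bar>"] B_fin that by auto
      then show ?thesis using Mf that by fastforce
    qed
    then show ?thesis unfolding bdd_above_def by blast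
  qed
  have bpH: "\<And>\<beta> y. \<beta> \<in> B \<Longrightarrow> y \<in> H \<Longrightarrow> b \<beta> y > 0" using b_pos Hc by blast
  have ratio_bdd: "\<exists>M. \<forall>x\<in>H. \<bar>Db \<beta> k x\<bar> / b \<beta> x \<le> M" if \<beta>: "\<beta> \<in> B" and k: "k \<le> 2" for \<beta> k
  proof -
    have c012: "continuous_on (closure H) (Db \<beta> 0)" "continuous_on (closure H) (Db \<beta> 1)"
      "continuous_on (closure H) (Db \<beta> 2)" using bF[OF \<beta>] by blast+
    have e0: "\<forall>x\<in>closure H. Db \<beta> 0 x = b \<beta> x" using bF[OF \<beta>] by blast
    have "k = 0 \<or> k = 1 \<or> k = 2" using k by linarith
    then have ck: "continuous_on (closure H) (Db \<beta> k)" using c012 by (elim disjE) simp_all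
    have nz: "\<forall>x\<in>closure H. Db \<beta> 0 x \<noteq> 0" using e0 b_pos \<beta> by (metis less_irrefl)
    have "continuous_on (closure H) (\<lambda>x. \<bar>Db \<beta> k x\<bar> / Db \<beta> 0 x)"
      by (intro continuous_intros ck c012(1)) (use nz in blast)
    then obtain M where M: "\<forall>x\<in>closure H. \<bar>\<bar>Db \<beta> k x\<bar> / Db \<beta> 0 x\<bar> \<le> M" using cont_bounded[OF cpt] by blast
    have "\<bar>Db \<beta> k x\<bar> / b \<beta> x \<le> M" if x: "x \<in> H" for x
    proof -
      have xc: "x \<in> closure H" using Hc x by blast
      have "\<bar>\<bar>Db \<beta> k x\<bar> / Db \<beta> 0 x\<bar> \<le> M" using M xc by blast
      then have "\<bar>\<bar>Db \<beta> k x\<bar> / b \<beta> x\<bar> \<le> M" using e0 xc by simp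
      then show ?thesis by (meson abs_ge_self order_trans)
    qed
    then show ?thesis by blast
  qed
  have bdd1: "bdd_above {\<bar>Db \<beta> 1 x\<bar> / b \<beta> x | \<beta> x. \<beta> \<in> B \<and> x \<in> H}"
    by (rule bddB) (use ratio_bdd in auto)
  have bdd2: "bdd_above {\<bar>Db \<beta> 2 x\<bar> / b \<beta> x | \<beta> x. \<beta> \<in> B \<and> x \<in> H}"
    by (rule bddB) (use ratio_bdd in auto)
  have bdd3: "bdd_above {\<bar>D\<theta> \<beta> 2 x\<bar> | \<beta> x. \<beta> \<in> B \<and> x \<in> closure H}"
  proof (rule bddB, intro ballI)
    fix \<beta> assume \<beta>: "\<beta> \<in> B"
    obtain M where "\<forall>x\<in>closure H. \<bar>D\<theta> \<beta> 2 x\<bar> \<le> M" using cont_bounded[OF cpt] tF[OF \<beta>] by blast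
    then show "\<exists>M. \<forall>x\<in>closure H. \<bar>D\<theta> \<beta> 2 x\<bar> \<le> M" by blast
  qed
  define a where "a = (\<lambda>\<beta> y. Db \<beta> 1 y / b \<beta> y)"
  define g where "g = (\<lambda>\<beta> y. Db \<beta> 2 y / b \<beta> y - (Db \<beta> 1 y / b \<beta> y)\<^sup>2)"
  have ab: "\<bar>a \<beta> y\<bar> \<le> C1" if "\<beta> \<in> B" "y \<in> H" for \<beta> y
  proof -
    have "\<bar>Db \<beta> 1 y\<bar> / b \<beta> y \<le> C1" unfolding C1_def by (rule cSup_upper[OF _ bdd1]) (use that in blast)
    then show ?thesis using bpH[OF that] by (simp add: a_def abs_divide)
  qed
  have eb: "\<bar>Db \<beta> 2 y / b \<beta> y\<bar> \<le> C2" if "\<beta> \<in> B" "y \<in> H" for \<beta> y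
  proof -
    have "\<bar>Db \<beta> 2 y\<bar> / b \<beta> y \<le> C2" unfolding C2_def by (rule cSup_upper[OF _ bdd2]) (use that in blast)
    then show ?thesis using bpH[OF that] by (simp add: abs_divide)
  qed
  have t2b: "\<bar>D\<theta> \<beta> 2 y\<bar> \<le> M0" if "\<beta> \<in> B" "y \<in> H" for \<beta> y
    unfolding M0_def by (rule cSup_upper[OF _ bdd3]) (use that Hc in blast)
  have gup: "g \<beta> y \<le> C2" if "\<beta> \<in> B" "y \<in> H" for \<beta> y
    using eb[OF that] unfolding g_def by (smt (verit) zero_le_power2)
  have glo: "g \<beta> y \<ge> -(C2 + C1\<^sup>2)" if "\<beta> \<in> B" "y \<in> H" for \<beta> y
  proof -
    have "(a \<beta> y)\<^sup>2 \<le> C1\<^sup>2" using power_mono[OF ab[OF that] abs_ge_zero, of 2] by simp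
    then show ?thesis using eb[OF that] unfolding g_def a_def by (smt (verit))
  qed
  have C1nn: "C1 \<ge> 0" using ab[OF \<beta>0 x0] by linarith
  have C2nn: "C2 \<ge> 0" using eb[OF \<beta>0 x0] by linarith
  have M0nn: "M0 \<ge> 0" using t2b[OF \<beta>0 x0] by linarith
  have vpH: "\<And>y. y \<in> H \<Longrightarrow> v y > 0" using v_pos Hc by blast
  have eigH: "\<And>y. y \<in> H \<Longrightarrow> (\<Sum>\<beta>\<in>B. b \<beta> y powr s * v (\<theta> \<beta> y)) = lam * v y" using v_eig Hc by blast
  have th: "\<And>\<beta> y. \<beta> \<in> B \<Longrightarrow> y \<in> H \<Longrightarrow> \<theta> \<beta> y \<in> H" using \<theta>_maps by blast
  have lam: "lam > 0"
  proof -
    have "(\<Sum>\<beta>\<in>B. b \<beta> x0 powr s * v (\<theta> \<beta> x0)) > 0"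
    proof (rule sum_pos[OF B_fin B_ne])
      fix \<beta> assume \<beta>: "\<beta> \<in> B"
      have "0 < b \<beta> x0 powr s" using bpH[OF \<beta> x0] by simp
      moreover have "0 < v (\<theta> \<beta> x0)" using vpH[OF th[OF \<beta> x0]] .
      ultimately show "0 < b \<beta> x0 powr s * v (\<theta> \<beta> x0)" by simp
    qed
    then have "lam * v x0 > 0" using eigH[OF x0] by simp
    then show ?thesis using vpH[OF x0] by (simp add: zero_less_mult_iff)
  qed
  define p where "p = (\<lambda>\<beta> y. b \<beta> y powr s * v (\<theta> \<beta> y) / (lam * v y))"
  have p_nn: "\<And>\<beta> y. \<beta> \<in> B \<Longrightarrow> y \<in> H \<Longrightarrow> p \<beta> y \<ge> 0"
  proof -
    fix \<beta> y assume "\<beta> \<in> B" "y \<in> H"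
    then have "v (\<theta> \<beta> y) > 0" "v y > 0" using vpH th by blast+
    then show "p \<beta> y \<ge> 0" unfolding p_def using lam by (auto intro!: divide_nonneg_pos mult_nonneg_nonneg)
  qed
  have p_sum: "\<And>y. y \<in> H \<Longrightarrow> (\<Sum>\<beta>\<in>B. p \<beta> y) = 1"
  proof -
    fix y assume y: "y \<in> H"
    have "lam * v y > 0" using lam vpH[OF y] by simp
    then show "(\<Sum>\<beta>\<in>B. p \<beta> y) = 1" unfolding p_def sum_divide_distrib[symmetric] eigH[OF y] using lam vpH[OF y] by simp
  qed
  define w where "w = (\<lambda>y. Dv 1 y / v y)"
  define z where "z = (\<lambda>y. Dv 2 y / v y)"
  have dv: "\<And>y. y \<in> H \<Longrightarrow> (v has_real_derivative Dv 1 y) (at y)"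
    and dv1: "\<And>y. y \<in> H \<Longrightarrow> (Dv 1 has_real_derivative Dv 2 y) (at y)" using vF by blast+
  have db: "\<And>\<beta> y. \<beta> \<in> B \<Longrightarrow> y \<in> H \<Longrightarrow> (b \<beta> has_real_derivative Db \<beta> 1 y) (at y)"
    using bF by blast
  have db1: "\<And>\<beta> y. \<beta> \<in> B \<Longrightarrow> y \<in> H \<Longrightarrow> (Db \<beta> 1 has_real_derivative Db \<beta> 2 y) (at y)"
    using bF by blast
  have dt: "\<And>\<beta> y. \<beta> \<in> B \<Longrightarrow> y \<in> H \<Longrightarrow> (\<theta> \<beta> has_real_derivative D\<theta> \<beta> 1 y) (at y)"
    and dt1: "\<And>\<beta> y. \<beta> \<in> B \<Longrightarrow> y \<in> H \<Longrightarrow> (D\<theta> \<beta> 1 has_real_derivative D\<theta> \<beta> 2 y) (at y)"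
    using tF by blast+
  have step1: "w y = (\<Sum>\<beta>\<in>B. p \<beta> y * (s * a \<beta> y + D\<theta> \<beta> 1 y * w (\<theta> \<beta> y)))" if y: "y \<in> H" for y
    unfolding w_def a_def p_def
    by (rule one_step(1)[OF opn B_fin \<theta>_maps bpH db db1 dt dt1 dv dv1 vpH lam eigH y])
  have step2: "z y = (\<Sum>\<beta>\<in>B. p \<beta> y * (s * g \<beta> y + s\<^sup>2 * (a \<beta> y)\<^sup>2 + 2 * s * a \<beta> y * D\<theta> \<beta> 1 y * w (\<theta> \<beta> y)
            + D\<theta> \<beta> 2 y * w (\<theta> \<beta> y) + (D\<theta> \<beta> 1 y)\<^sup>2 * z (\<theta> \<beta> y)))" if y: "y \<in> H" for y
    unfolding w_def z_def a_def g_def p_def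
    by (rule one_step(2)[OF opn B_fin \<theta>_maps bpH db db1 dt dt1 dv dv1 vpH lam eigH y])
  have e0v: "\<forall>x\<in>closure H. Dv 0 x = v x" using vF by blast
  have nzv: "\<forall>x\<in>closure H. Dv 0 x \<noteq> 0" using e0v v_pos by (metis less_irrefl)
  have cv: "continuous_on (closure H) (Dv 0)" "continuous_on (closure H) (Dv 1)" "continuous_on (closure H) (Dv 2)"
    using vF by blast+
  have cw: "continuous_on (closure H) (\<lambda>x. Dv 1 x / Dv 0 x)" by (intro continuous_intros cv) (use nzv in blast)
  have cz: "continuous_on (closure H) (\<lambda>x. Dv 2 x / Dv 0 x)" by (intro continuous_intros cv) (use nzv in blast)
  obtain W where W: "\<forall>x\<in>closure H. \<bar>Dv 1 x / Dv 0 x\<bar> \<le> W" using cont_bounded[OF cpt cw] by blast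
  obtain Z where Z: "\<forall>x\<in>closure H. \<bar>Dv 2 x / Dv 0 x\<bar> \<le> Z" using cont_bounded[OF cpt cz] by blast
  have wb: "\<And>y. y \<in> H \<Longrightarrow> \<bar>w y\<bar> \<le> W" unfolding w_def using W e0v Hc by (metis subsetD)
  have zb: "\<And>y. y \<in> H \<Longrightarrow> \<bar>z y\<bar> \<le> Z" unfolding z_def using Z e0v Hc by (metis subsetD)
  have onH: "z y \<le> s\<^sup>2 * C1\<^sup>2 * (suminf \<epsilon>)\<^sup>2 + s * (\<Sum>k. (\<epsilon> k)\<^sup>2) * (C2 + C1 * M0 * suminf \<epsilon>)
      \<and> z y \<ge> - s * (\<Sum>k. (\<epsilon> k)\<^sup>2) * ((C2 + C1\<^sup>2) + C1 * M0 * suminf \<epsilon>)" if y: "y \<in> H" for y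
    using final_bounds[where B=B and H=H and \<theta>=\<theta> and ?t1.0="\<lambda>\<beta>. D\<theta> \<beta> 1" and ?t2.0="\<lambda>\<beta>. D\<theta> \<beta> 2"
        and a=a and g=g and p=p and \<epsilon>=\<epsilon> and ?M0.0=M0 and ?C1.0=C1 and ?C2.0=C2 and s=s and W=W and Z=Z
        and w=w and z=z and x=y,
        OF \<theta>_maps dWb t2b ab gup glo C2nn C1nn M0nn p_nn p_sum step1 step2 eps_nn' sum1 sum2 wb zb _ y] s_pos
    by auto
  show ?thesis
  proof
    fix x assume x: "x \<in> closure H"
    have "Dv 2 x / Dv 0 x \<le> s\<^sup>2 * C1\<^sup>2 * (suminf \<epsilon>)\<^sup>2 + s * (\<Sum>k. (\<epsilon> k)\<^sup>2) * (C2 + C1 * M0 * suminf \<epsilon>)"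
      by (rule continuous_le_on_closure[OF cz x]) (use onH e0v Hc in \<open>auto simp: z_def\<close>)
    moreover have "Dv 2 x / Dv 0 x \<ge> - s * (\<Sum>k. (\<epsilon> k)\<^sup>2) * ((C2 + C1\<^sup>2) + C1 * M0 * suminf \<epsilon>)"
      by (rule continuous_ge_on_closure[OF cz x]) (use onH e0v Hc in \<open>auto simp: z_def\<close>)
    ultimately show "Dv 2 x / v x \<le> s\<^sup>2 * C1\<^sup>2 * S1\<^sup>2 + s * S2 * (C2 + C1 * M0 * S1)
         \<and> Dv 2 x / v x \<ge> - s * S2 * ((C2 + C1\<^sup>2) + C1 * M0 * S1)"
      using e0v x unfolding S1_def S2_def \<epsilon>_def by simp
  qed
qed

end
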